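(* Let $\mathbf{C}$ be a category of $\mathbf{FI}$ type, and let $P,Q$ be character polynomials of respective degrees $\leq c_1$ and $\leq c_2$. Then the inner products $\langle P,Q\rangle_{G_d}=\frac{1}{|G_d|}\sum_{\sigma\in G_d}P(\sigma)\overline{Q(\sigma)}$ do not depend on $d$ for all objects $d\geq c_1+c_2$. Furthermore, if $P$ and $Q$ are characters of free $\mathbf{C}$-modules, then $\langle P,Q\rangle_{G_d}$ is a non-negative integer, monotonically non-decreasing in $d$.
   Context: A category $\mathbf{C}$ is of $\mathbf{FI}$ type if: (1) all Hom-sets are finite; (2) every morphism is a monomorphism and every endomorphism is an isomorphism; (3) for all objects $c,d$ the group $G_d=\mathrm{Aut}_{\mathbf{C}}(d)$ acts transitively on $\mathrm{Hom}_{\mathbf{C}}(c,d)$; (4) for every $d$ only finitely many isomorphism classes of $c$ have $\mathrm{Hom}(c,d)\neq\emptyset$; (5) every pair $c_1\to d\leftarrow c_2$ has a pullback, and every pair $f_i:p\to c_i$ has a weak push-out, i.e. a commutative pullback square $g_i:c_i\to d$ such that for every other pullback square $h_i:c_i\to z$ with $h_1f_1=h_2f_2$ there is a unique $h:d\to z$ with $hg_i=h_i$. Write $c\leq d$ if $\mathrm{Hom}(c,d)\neq\emptyset$. Write $d\geq c_1+c_2$ if $w\leq d$ for every weak push-out object $w$ of any pair of morphisms $p\to c_1$, $p\to c_2$. Binomial set: $\binom{d}{c}=\mathrm{Hom}(c,d)/G_c$. For a conjugacy class $\mu\subseteq G_c$ (write $|\mu|=c$), $\binom{X}{\mu}$ is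 the class function on every $G_d$ given by $\sigma\mapsto\#\{[f]\in\binom{d}{c}:\exists\psi\in\mu,\ \sigma f=f\psi\}$. A character polynomial is a $\mathbb{C}$-linear combination of these; degree $\leq d$ means each $\binom{X}{\mu}$ appearing nontrivially has $|\mu|\leq d$. For a finite-dimensional $G_c$-representation $V$, $\mathrm{Ind}_c(V)$ is $d\mapsto\mathbb{C}[\mathrm{Hom}(c,d)]\otimes_{\mathbb{C}[G_c]}V$; a free $\mathbf{C}$-module is a finite direct sum of these; its character assigns to $G_d$ the character of its value at $d$. *)

theory Defs
  imports Complex_Main "Jordan_Normal_Form.Matrix"
begin

text \<open>ccomp g f is the composite "g after f".\<close>
record ('o, 'm) cat =
  cOb :: "'o set"
  cHom :: "'o \<Rightarrow> 'o \<Rightarrow> 'm set"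
  ccomp :: "'m \<Rightarrow> 'm \<Rightarrow> 'm"
  cid :: "'o \<Rightarrow> 'm"

definition is_category :: "('o, 'm) cat \<Rightarrow> bool" where
  "is_category C \<longleftrightarrow>
     (\<forall>a\<in>cOb C. cid C a \<in> cHom C a a) \<and>
     (\<forall>a\<in>cOb C. \<forall>b\<in>cOb C. \<forall>c\<in>cOb C. \<forall>f\<in>cHom C a b. \<forall>g\<in>cHom C b c.
        ccomp C g f \<in> cHom C a c) \<and>
     (\<forall>a\<in>cOb C. \<forall>b\<in>cOb C. \<forall>f\<in>cHom C a b.
        ccomp C (cid C b) f = f \<and> ccomp C f (cid C a) = f) \<and>
     (\<forall>a\<in>cOb C. \<forall>b\<in>cOb C. \<forall>c\<in>cOb C. \<forall>d\<in>cOb C.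
        \<forall>f\<in>cHom C a b. \<forall>g\<in>cHom C b c. \<forall>h\<in>cHom C c d.
        ccomp C h (ccomp C g f) = ccomp C (ccomp C h g) f)"

definition is_mono :: "('o, 'm) cat \<Rightarrow> 'o \<Rightarrow> 'o \<Rightarrow> 'm \<Rightarrow> bool" where
  "is_mono C a b f \<longleftrightarrow> f \<in> cHom C a b \<and>
     (\<forall>e\<in>cOb C. \<forall>g\<in>cHom C e a. \<forall>h\<in>cHom C e a. ccomp C f g = ccomp C f h \<longrightarrow> g = h)"

definition is_iso :: "('o, 'm) cat \<Rightarrow> 'o \<Rightarrow> 'o \<Rightarrow> 'm \<Rightarrow> bool" where
  "is_iso C a b f \<longleftrightarrow> f \<in> cHom C a b \<and>
     (\<exists>g\<in>cHom C b a. ccomp C g f = cid C a \<and> ccomp C f g = cid C b)"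

definition isomorphic :: "('o, 'm) cat \<Rightarrow> 'o \<Rightarrow> 'o \<Rightarrow> bool" where
  "isomorphic C a b \<longleftrightarrow> (\<exists>f. is_iso C a b f)"

definition Aut :: "('o, 'm) cat \<Rightarrow> 'o \<Rightarrow> 'm set" where
  "Aut C d = {f. is_iso C d d f}"

definition is_pullback_square ::
  "('o, 'm) cat \<Rightarrow> 'o \<Rightarrow> 'o \<Rightarrow> 'o \<Rightarrow> 'o \<Rightarrow> 'm \<Rightarrow> 'm \<Rightarrow> 'm \<Rightarrow> 'm \<Rightarrow> bool" where
  "is_pullback_square C p c1 c2 d f1 f2 g1 g2 \<longleftrightarrow>
     f1 \<in> cHom C p c1 \<and> f2 \<in> cHom C p c2 \<and> g1 \<in> cHom C c1 d \<and> g2 \<in> cHom C c2 d \<and>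
     ccomp C g1 f1 = ccomp C g2 f2 \<and>
     (\<forall>z\<in>cOb C. \<forall>h1\<in>cHom C z c1. \<forall>h2\<in>cHom C z c2.
        ccomp C g1 h1 = ccomp C g2 h2 \<longrightarrow>
        (\<exists>!h. h \<in> cHom C z p \<and> ccomp C f1 h = h1 \<and> ccomp C f2 h = h2))"

definition is_weak_pushout ::
  "('o, 'm) cat \<Rightarrow> 'o \<Rightarrow> 'o \<Rightarrow> 'o \<Rightarrow> 'm \<Rightarrow> 'm \<Rightarrow> 'o \<Rightarrow> 'm \<Rightarrow> 'm \<Rightarrow> bool" where
  "is_weak_pushout C p c1 c2 f1 f2 d g1 g2 \<longleftrightarrow>
     d \<in> cOb C \<and> is_pullback_square C p c1 c2 d f1 f2 g1 g2 \<and>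
     (\<forall>z\<in>cOb C. \<forall>h1 h2. is_pullback_square C p c1 c2 z f1 f2 h1 h2 \<longrightarrow>
        (\<exists>!h. h \<in> cHom C d z \<and> ccomp C h g1 = h1 \<and> ccomp C h g2 = h2))"

definition FI_type :: "('o, 'm) cat \<Rightarrow> bool" where
  "FI_type C \<longleftrightarrow> is_category C \<and>
     \<comment> \<open>(1)\<close>
     (\<forall>c\<in>cOb C. \<forall>d\<in>cOb C. finite (cHom C c d)) \<and>
     \<comment> \<open>(2)\<close>
     (\<forall>c\<in>cOb C. \<forall>d\<in>cOb C. \<forall>f\<in>cHom C c d. is_mono C c d f) \<and>
     (\<forall>d\<in>cOb C. \<forall>f\<in>cHom C d d. is_iso C d d f) \<and>
     \<comment> \<open>(3)\<close>
     (\<forall>c\<in>cOb C. \<forall>d\<in>cOb C. \<forall>f\<in>cHom C c d. \<forall>g\<in>cHom C c d.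
        \<exists>\<sigma>\<in>Aut C d. ccomp C \<sigma> f = g) \<and>
     \<comment> \<open>(4)\<close>
     (\<forall>d\<in>cOb C. \<exists>F. finite F \<and> F \<subseteq> cOb C \<and>
        (\<forall>c\<in>cOb C. cHom C c d \<noteq> {} \<longrightarrow> (\<exists>c'\<in>F. isomorphic C c c'))) \<and>
     \<comment> \<open>(5) pullbacks\<close>
     (\<forall>c1\<in>cOb C. \<forall>c2\<in>cOb C. \<forall>d\<in>cOb C. \<forall>g1\<in>cHom C c1 d. \<forall>g2\<in>cHom C c2 d.
        \<exists>p\<in>cOb C. \<exists>f1 f2. is_pullback_square C p c1 c2 d f1 f2 g1 g2) \<and>
     \<comment> \<open>(5) weak push-outs\<close>
     (\<forall>p\<in>cOb C. \<forall>c1\<in>cOb C. \<forall>c2\<in>cOb C. \<forall>f1\<in>cHom C p c1. \<forall>f2\<in>cHom C p c2.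
        \<exists>d g1 g2. is_weak_pushout C p c1 c2 f1 f2 d g1 g2)"

definition obj_le :: "('o, 'm) cat \<Rightarrow> 'o \<Rightarrow> 'o \<Rightarrow> bool" where
  "obj_le C c d \<longleftrightarrow> cHom C c d \<noteq> {}"

definition obj_ge_sum :: "('o, 'm) cat \<Rightarrow> 'o \<Rightarrow> 'o \<Rightarrow> 'o \<Rightarrow> bool" where
  "obj_ge_sum C d c1 c2 \<longleftrightarrow>
     (\<forall>p\<in>cOb C. \<forall>f1\<in>cHom C p c1. \<forall>f2\<in>cHom C p c2. \<forall>w g1 g2.
        is_weak_pushout C p c1 c2 f1 f2 w g1 g2 \<longrightarrow> obj_le C w d)"

text \<open>binom(d, c) = Hom(c,d)/G_c, orbits under precomposition.\<close>
definition binom_set :: "('o, 'm) cat \<Rightarrow> 'o \<Rightarrow> 'o \<Rightarrow> 'm set set" where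
  "binom_set C d c = {{ccomp C f \<psi> | \<psi>. \<psi> \<in> Aut C c} | f. f \<in> cHom C c d}"

definition conj_class :: "('o, 'm) cat \<Rightarrow> 'o \<Rightarrow> 'm \<Rightarrow> 'm set" where
  "conj_class C c \<psi>0 = {\<psi> \<in> Aut C c. \<exists>\<tau>\<in>Aut C c. ccomp C \<tau> \<psi>0 = ccomp C \<psi> \<tau>}"

definition is_conj_class :: "('o, 'm) cat \<Rightarrow> 'o \<Rightarrow> 'm set \<Rightarrow> bool" where
  "is_conj_class C c \<mu> \<longleftrightarrow> (\<exists>\<psi>0\<in>Aut C c. \<mu> = conj_class C c \<psi>0)"

definition binomX :: "('o, 'm) cat \<Rightarrow> 'o \<Rightarrow> 'm set \<Rightarrow> 'o \<Rightarrow> 'm \<Rightarrow> complex" where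
  "binomX C c \<mu> d \<sigma> =
     of_nat (card {B \<in> binom_set C d c. \<exists>f\<in>B. \<exists>\<psi>\<in>\<mu>. ccomp C \<sigma> f = ccomp C f \<psi>})"

text \<open>P (a class function on every G_d, given as P d sigma) is a character polynomial
  of degree <= c: a finite C-linear combination of binomX mu_i with |mu_i| <= c.\<close>
definition char_poly_deg_le :: "('o, 'm) cat \<Rightarrow> ('o \<Rightarrow> 'm \<Rightarrow> complex) \<Rightarrow> 'o \<Rightarrow> bool" where
  "char_poly_deg_le C P c \<longleftrightarrow>
     (\<exists>(n::nat) (a :: nat \<Rightarrow> complex) (e :: nat \<Rightarrow> 'o) (\<mu> :: nat \<Rightarrow> 'm set).
        (\<forall>i<n. e i \<in> cOb C \<and> is_conj_class C (e i) (\<mu> i) \<and> obj_le C (e i) c) \<and>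
        (\<forall>d\<in>cOb C. \<forall>\<sigma>\<in>Aut C d. P d \<sigma> = (\<Sum>i<n. a i * binomX C (e i) (\<mu> i) d \<sigma>)))"

definition inner_G :: "('o, 'm) cat \<Rightarrow> ('o \<Rightarrow> 'm \<Rightarrow> complex) \<Rightarrow> ('o \<Rightarrow> 'm \<Rightarrow> complex) \<Rightarrow> 'o \<Rightarrow> complex" where
  "inner_G C P Q d = (1 / of_nat (card (Aut C d))) * (\<Sum>\<sigma>\<in>Aut C d. P d \<sigma> * cnj (Q d \<sigma>))"

definition mtrace :: "complex mat \<Rightarrow> complex" where
  "mtrace A = (\<Sum>i<dim_row A. A $$ (i, i))"

definition is_rep :: "('o, 'm) cat \<Rightarrow> 'o \<Rightarrow> nat \<Rightarrow> ('m \<Rightarrow> complex mat) \<Rightarrow> bool" where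
  "is_rep C c k \<rho> \<longleftrightarrow>
     (\<forall>\<psi>\<in>Aut C c. \<rho> \<psi> \<in> carrier_mat k k) \<and>
     \<rho> (cid C c) = 1\<^sub>m k \<and>
     (\<forall>\<psi>\<in>Aut C c. \<forall>\<psi>'\<in>Aut C c. \<rho> (ccomp C \<psi> \<psi>') = \<rho> \<psi> * \<rho> \<psi>')"

text \<open>Character of Ind_c(V) = C[Hom(c,-)] \<otimes>_{C[G_c]} V at sigma in G_d.
  Since G_c acts freely on Hom(c,d) (all maps are monic), Ind_c(V)(d) is the direct
  sum over the orbits [f] of copies f \<otimes> V, and sigma maps the summand of [f] to that
  of [sigma f]; so the trace is the sum over orbits [f] with sigma f = f psi of
  chi_V(psi). We write it as an average over all f in Hom(c,d).\<close>
definition ind_char :: "('o, 'm) cat \<Rightarrow> 'o \<Rightarrow> ('m \<Rightarrow> complex mat) \<Rightarrow> 'o \<Rightarrow> 'm \<Rightarrow> complex" where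
  "ind_char C c \<rho> d \<sigma> =
     (1 / of_nat (card (Aut C c))) *
     (\<Sum>f\<in>cHom C c d.
        if (\<exists>\<psi>\<in>Aut C c. ccomp C \<sigma> f = ccomp C f \<psi>)
        then mtrace (\<rho> (THE \<psi>. \<psi> \<in> Aut C c \<and> ccomp C \<sigma> f = ccomp C f \<psi>))
        else 0)"

text \<open>P is the character of a free C-module, i.e. of a finite direct sum of Ind_{c_i}(V_i).\<close>
definition is_free_char :: "('o, 'm) cat \<Rightarrow> ('o \<Rightarrow> 'm \<Rightarrow> complex) \<Rightarrow> bool" where
  "is_free_char C P \<longleftrightarrow>
     (\<exists>(n::nat) (e :: nat \<Rightarrow> 'o) (k :: nat \<Rightarrow> nat) (\<rho> :: nat \<Rightarrow> 'm \<Rightarrow> complex mat).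
        (\<forall>i<n. e i \<in> cOb C \<and> is_rep C (e i) (k i) (\<rho> i)) \<and>
        (\<forall>d\<in>cOb C. \<forall>\<sigma>\<in>Aut C d. P d \<sigma> = (\<Sum>i<n. ind_char C (e i) (\<rho> i) d \<sigma>)))"

end

theory Submission
  imports Defs "HOL-Algebra.Multiplicative_Group" "HOL-Algebra.Group_Action" "Jordan_Normal_Form.Schur_Decomposition"
begin

lemma mtrace_mult_comm:
  assumes A: "(A::complex mat) \<in> carrier_mat n m" and B: "B \<in> carrier_mat m n"
  shows "mtrace (A * B) = mtrace (B * A)"
proof -
  have "mtrace (A * B) = (\<Sum>i<n. \<Sum>j<m. A $$ (i,j) * B $$ (j,i))"
    using A B by (simp add: mtrace_def scalar_prod_def row_def col_def atLeast0LessThan)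
  also have "\<dots> = (\<Sum>j<m. \<Sum>i<n. B $$ (j,i) * A $$ (i,j))"
    by (subst sum.swap) (simp add: mult.commute)
  also have "\<dots> = mtrace (B * A)"
    using A B by (simp add: mtrace_def scalar_prod_def row_def col_def atLeast0LessThan)
  finally show ?thesis .
qed

lemma mtrace_similar:
  assumes "similar_mat_wit (A::complex mat) B P Q"
  shows "mtrace A = mtrace B"
proof -
  obtain n where n: "A \<in> carrier_mat n n" "B \<in> carrier_mat n n" "P \<in> carrier_mat n n" "Q \<in> carrier_mat n n"
    "P * Q = 1\<^sub>m n" "Q * P = 1\<^sub>m n" "A = P * B * Q"
    using assms unfolding similar_mat_wit_def Let_def by auto
  have "mtrace A = mtrace (P * (B * Q))" using n by (simp add: assoc_mult_mat[of P n n B n Q n])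
  also have "\<dots> = mtrace ((B * Q) * P)" using n by (intro mtrace_mult_comm) auto
  also have "(B * Q) * P = B" using n by (simp add: assoc_mult_mat[of B n n Q n P n])
  finally show ?thesis .
qed

lemma upper_triangular_mult:
  assumes A: "(A::complex mat) \<in> carrier_mat n n" and B: "B \<in> carrier_mat n n"
    and uA: "upper_triangular A" and uB: "upper_triangular B"
  shows "upper_triangular (A * B) \<and> (\<forall>i<n. (A * B) $$ (i,i) = A $$ (i,i) * B $$ (i,i))"
proof -
  have ut: "(A * B) $$ (i,j) = 0" if "i < n" "j < i" for i j
  proof -
    have "(A * B) $$ (i,j) = (\<Sum>l<n. A $$ (i,l) * B $$ (l,j))"
      using A B that by (simp add: scalar_prod_def row_def col_def atLeast0LessThan)
    also have "\<dots> = 0"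
    proof (intro sum.neutral ballI)
      fix l assume "l \<in> {..<n}"
      then show "A $$ (i,l) * B $$ (l,j) = 0" using uA uB A B that
        by (cases "l < i") (auto simp: upper_triangular_def)
    qed
    finally show ?thesis .
  qed
  have dg: "(A * B) $$ (i,i) = A $$ (i,i) * B $$ (i,i)" if "i < n" for i
  proof -
    have "(A * B) $$ (i,i) = (\<Sum>l<n. A $$ (i,l) * B $$ (l,i))"
      using A B that by (simp add: scalar_prod_def row_def col_def atLeast0LessThan)
    also have "\<dots> = (\<Sum>l\<in>{i}. A $$ (i,l) * B $$ (l,i))"
    proof (rule sum.mono_neutral_right)
      show "\<forall>l\<in>{..<n} - {i}. A $$ (i,l) * B $$ (l,i) = 0"
      proof
        fix l assume "l \<in> {..<n} - {i}"
        then show "A $$ (i,l) * B $$ (l,i) = 0" using uA uB A B that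
          by (cases "l < i") (auto simp: upper_triangular_def)
      qed
    qed (use that in auto)
    finally show ?thesis by simp
  qed
  show ?thesis using ut dg A B by (auto simp: upper_triangular_def)
qed

lemma upper_triangular_pow:
  assumes A: "(A::complex mat) \<in> carrier_mat n n" and uA: "upper_triangular A"
  shows "upper_triangular (A ^\<^sub>m m) \<and> (\<forall>i<n. (A ^\<^sub>m m) $$ (i,i) = (A $$ (i,i)) ^ m)"
proof (induction m)
  case 0
  then show ?case using A by auto
next
  case (Suc m)
  have c: "A ^\<^sub>m m \<in> carrier_mat n n" using A by auto
  from upper_triangular_mult[OF c A] Suc uA show ?case by auto
qed

lemma schur_exists:
  assumes A: "(A::complex mat) \<in> carrier_mat n n"
  shows "\<exists>B P Q. similar_mat_wit A B P Q \<and> upper_triangular B \<and> B \<in> carrier_mat n n"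
proof -
  obtain es where es: "char_poly A = (\<Prod> a \<leftarrow> es. pCons (- a) (pCons 1 0))"
    using char_poly_factorized[OF A] by blast
  obtain B P Q where "schur_decomposition A es = (B,P,Q)" by (cases "schur_decomposition A es") auto
  from schur_decomposition[OF A es this] show ?thesis
    using A unfolding similar_mat_wit_def Let_def by auto
qed

lemma conj_assoc_helper:
  assumes P: "(P::complex mat) \<in> carrier_mat n n" and Q: "Q \<in> carrier_mat n n" and X: "X \<in> carrier_mat n n"
  shows "Q * (P * X * Q) * P = (Q * P) * X * (Q * P)"
proof -
  have PX: "P * X \<in> carrier_mat n n" using P X by simp
  have QPX: "Q * (P * X) \<in> carrier_mat n n" using Q PX by simp
  have "Q * (P * X * Q) = (Q * (P * X)) * Q"
    using assoc_mult_mat[OF Q PX Q] by simp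
  then have "Q * (P * X * Q) * P = (Q * (P * X)) * Q * P" by simp
  also have "\<dots> = (Q * (P * X)) * (Q * P)" using assoc_mult_mat[OF QPX Q P] .
  also have "Q * (P * X) = (Q * P) * X" using assoc_mult_mat[OF Q P X] by simp
  finally show ?thesis .
qed

lemma mtrace_upper:
  assumes "(T::complex mat) \<in> carrier_mat n n"
  shows "mtrace T = (\<Sum>i<n. T $$ (i,i))"
  using assms by (simp add: mtrace_def)

lemma idempotent_trace_nat:
  assumes E: "(E::complex mat) \<in> carrier_mat n n" and EE: "E * E = E"
  shows "\<exists>m::nat. mtrace E = of_nat m"
proof -
  obtain T P Q where w: "similar_mat_wit E T P Q" and uT: "upper_triangular T" and T: "T \<in> carrier_mat n n"
    using schur_exists[OF E] by blast
  from w E have P: "P \<in> carrier_mat n n" and Q: "Q \<in> carrier_mat n n" and PQ: "P * Q = 1\<^sub>m n"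
    and QP: "Q * P = 1\<^sub>m n" and EPTQ: "E = P * T * Q"
    unfolding similar_mat_wit_def Let_def by auto
  have TQEP: "T = Q * E * P"
  proof -
    have "Q * E * P = Q * (P * T * Q) * P" using EPTQ by simp
    also have "\<dots> = (Q * P) * T * (Q * P)"
      using conj_assoc_helper[OF P Q T] by simp
    also have "\<dots> = T" using QP T by simp
    finally show ?thesis by simp
  qed
  have TT: "T * T = T"
  proof -
    have "T * T = Q * E * P * (Q * E * P)" using TQEP by simp
    also have "\<dots> = Q * E * (P * Q) * E * P"
      using P Q E by (simp add: assoc_mult_mat[of _ n n _ n _ n])
    also have "\<dots> = Q * (E * E) * P"
      using P Q E PQ by (simp add: assoc_mult_mat[of _ n n _ n _ n])
    also have "\<dots> = T" using EE TQEP by simp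
    finally show ?thesis .
  qed
  have d01: "T $$ (i,i) = (if T $$ (i,i) = 1 then 1 else 0)" if "i < n" for i
  proof -
    have "T $$ (i,i) * T $$ (i,i) = T $$ (i,i)"
      using upper_triangular_mult[OF T T uT uT] TT that by auto
    then have "T $$ (i,i) = 0 \<or> T $$ (i,i) = 1"
      by (metis mult_cancel_left2 mult_eq_0_iff)
    then show ?thesis by auto
  qed
  have "mtrace E = mtrace T" using mtrace_similar[OF w] .
  also have "\<dots> = (\<Sum>i<n. T $$ (i,i))" using T by (simp add: mtrace_def)
  also have "\<dots> = (\<Sum>i<n. of_nat (if T $$ (i,i) = 1 then 1 else 0))"
    by (intro sum.cong refl) (subst d01, auto)
  also have "\<dots> = of_nat (\<Sum>i<n. (if T $$ (i,i) = 1 then 1 else 0))" by simp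
  finally show ?thesis by blast
qed

lemma cnj_trace_finite_order:
  assumes A: "(A::complex mat) \<in> carrier_mat n n" and N: "N > 0" and AN: "A ^\<^sub>m N = 1\<^sub>m n"
  shows "cnj (mtrace A) = mtrace (A ^\<^sub>m (N - 1))"
proof -
  obtain T P Q where w: "similar_mat_wit A T P Q" and uT: "upper_triangular T" and T: "T \<in> carrier_mat n n"
    using schur_exists[OF A] by blast
  from w A have P: "P \<in> carrier_mat n n" and Q: "Q \<in> carrier_mat n n" and PQ: "P * Q = 1\<^sub>m n"
    and QP: "Q * P = 1\<^sub>m n"
    unfolding similar_mat_wit_def Let_def by auto
  have pw: "A ^\<^sub>m j = P * T ^\<^sub>m j * Q" for j using similar_mat_wit_pow_id[OF w] .
  have TN: "T ^\<^sub>m N = 1\<^sub>m n"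
  proof -
    have "Q * (A ^\<^sub>m N) * P = Q * (P * T ^\<^sub>m N * Q) * P" using pw by simp
    also have "\<dots> = (Q * P) * T ^\<^sub>m N * (Q * P)"
      using conj_assoc_helper[OF P Q pow_carrier_mat[OF T, of N]] by simp
    also have "\<dots> = T ^\<^sub>m N" using QP T by simp
    finally have "T ^\<^sub>m N = Q * (A ^\<^sub>m N) * P" by simp
    also have "\<dots> = 1\<^sub>m n" using AN QP Q P by simp
    finally show ?thesis .
  qed
  have dg: "T $$ (i,i) ^ N = 1" if "i < n" for i
    using upper_triangular_pow[OF T uT, of N] TN that by auto
  have cj: "cnj (T $$ (i,i)) = T $$ (i,i) ^ (N - 1)" if "i < n" for i
  proof -
    let ?z = "T $$ (i,i)"
    have "norm ?z ^ N = 1" using dg[OF that] by (metis norm_one norm_power)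
    then have nz: "norm ?z = 1" using N power_eq_imp_eq_base[of "norm ?z" N 1] by simp
    have "?z * ?z ^ (N - 1) = 1" using dg[OF that] N by (cases N) auto
    moreover have "?z * cnj ?z = 1"
    proof -
      have "?z * cnj ?z = complex_of_real ((cmod ?z)^2)" by (rule complex_norm_square[symmetric])
      then show ?thesis using nz by simp
    qed
    ultimately show ?thesis using inverse_unique by metis
  qed
  have "mtrace (A ^\<^sub>m (N - 1)) = mtrace (T ^\<^sub>m (N - 1))"
    using mtrace_similar[OF similar_mat_wit_pow[OF w]] .
  also have "\<dots> = (\<Sum>i<n. T $$ (i,i) ^ (N - 1))"
    using upper_triangular_pow[OF T uT, of "N - 1"] T by (simp add: mtrace_def)
  also have "\<dots> = (\<Sum>i<n. cnj (T $$ (i,i)))" using cj by simp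
  also have "\<dots> = cnj (mtrace T)" using T by (simp add: mtrace_def)
  also have "\<dots> = cnj (mtrace A)" using mtrace_similar[OF w] by simp
  finally show ?thesis by simp
qed

lemma aux_lt_mult: "(a::nat) < k \<Longrightarrow> b < k' \<Longrightarrow> a * k' + b < k * k'"
proof -
  assume "a < k" "b < k'"
  then have "a * k' + b < (a + 1) * k'" by simp
  also have "\<dots> \<le> k * k'" using \<open>a < k\<close> by (intro mult_right_mono) auto
  finally show ?thesis .
qed

lemma aux_mod_lt: "(b::nat) < k * k' \<Longrightarrow> b mod k' < k'"
  by (cases "k' = 0") auto

lemma sum_div_mod:
  fixes k k' :: nat
  shows "(\<Sum>r<k*k'. f (r div k') (r mod k')) = (\<Sum>i<k. \<Sum>j<k'. (f i j :: complex))"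
proof -
  have "(\<Sum>i<k. \<Sum>j<k'. f i j) = (\<Sum>(i,j)\<in>{..<k} \<times> {..<k'}. f i j)"
    by (simp add: sum.cartesian_product)
  also have "\<dots> = (\<Sum>r<k*k'. f (r div k') (r mod k'))"
    apply (rule sum.reindex_bij_witness[where i = "\<lambda>r. (r div k', r mod k')" and j = "\<lambda>(a,b). a*k'+b"])
    apply (auto simp: less_mult_imp_div_less aux_lt_mult aux_mod_lt)
    done
  finally show ?thesis by simp
qed


definition grep :: "('g, 'x) monoid_scheme \<Rightarrow> nat \<Rightarrow> ('g \<Rightarrow> complex mat) \<Rightarrow> bool" where
  "grep G k \<rho> \<longleftrightarrow> (\<forall>h\<in>carrier G. \<rho> h \<in> carrier_mat k k) \<and> \<rho> \<one>\<^bsub>G\<^esub> = 1\<^sub>m k \<and>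
     (\<forall>x\<in>carrier G. \<forall>y\<in>carrier G. \<rho> (x \<otimes>\<^bsub>G\<^esub> y) = \<rho> x * \<rho> y)"

lemma (in group) grep_pow:
  assumes r: "grep G k \<rho>" and h: "h \<in> carrier G"
  shows "\<rho> (h [^] (m::nat)) = \<rho> h ^\<^sub>m m"
proof (induction m)
  case 0
  then show ?case using r h by (auto simp: grep_def)
next
  case (Suc m)
  have "\<rho> (h [^] Suc m) = \<rho> (h [^] m \<otimes> h)" by simp
  also have "\<dots> = \<rho> (h [^] m) * \<rho> h" using r h by (simp add: grep_def)
  finally show ?case using Suc by simp
qed

lemma (in group) grep_cnj:
  assumes fin: "finite (carrier G)" and r: "grep G k \<rho>" and h: "h \<in> carrier G"
  shows "cnj (mtrace (\<rho> h)) = mtrace (\<rho> (inv h))"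
proof -
  define N where "N = Coset.order G"
  have N: "N > 0" using fin by (simp add: order_gt_0_iff_finite N_def)
  have hN: "h [^] N = \<one>" using pow_order_eq_1[OF h] by (simp add: N_def)
  have A: "\<rho> h \<in> carrier_mat k k" using r h by (simp add: grep_def)
  have r1: "\<rho> \<one> = 1\<^sub>m k" using r by (simp add: grep_def)
  have "\<rho> h ^\<^sub>m N = \<rho> (h [^] N)" using grep_pow[OF r h, of N] by simp
  also have "\<dots> = 1\<^sub>m k" using hN r1 by simp
  finally have AN: "\<rho> h ^\<^sub>m N = 1\<^sub>m k" .
  from cnj_trace_finite_order[OF A N AN]
  have "cnj (mtrace (\<rho> h)) = mtrace (\<rho> h ^\<^sub>m (N - 1))" .
  also have "\<rho> h ^\<^sub>m (N - 1) = \<rho> (h [^] (N - 1))" using grep_pow[OF r h, of "N - 1"] by simp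
  also have "h [^] (N - 1) = inv h"
  proof -
    have NS: "N = Suc (N - 1)" using N by simp
    have "h [^] N = h [^] (N - 1) \<otimes> h" by (subst NS, rule nat_pow_Suc)
    then have e: "h [^] (N - 1) \<otimes> h = \<one>" using hN by simp
    have c: "h [^] (N - 1) \<in> carrier G" using h by simp
    show ?thesis using inv_equality[OF e h c] by simp
  qed
  finally show ?thesis .
qed

definition tens :: "('g \<Rightarrow> complex mat) \<Rightarrow> ('g \<Rightarrow> complex mat) \<Rightarrow> ('g \<Rightarrow> 'g) \<Rightarrow> nat \<Rightarrow> 'g \<Rightarrow> nat \<Rightarrow> nat \<Rightarrow> complex" where
  "tens \<rho> \<rho>' iv k' h r s = \<rho> h $$ (r div k', s div k') * \<rho>' (iv h) $$ (s mod k', r mod k')"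

lemma mat_mult_entry:
  assumes "(A::complex mat) \<in> carrier_mat n m" "B \<in> carrier_mat m l" "i < n" "j < l"
  shows "(A * B) $$ (i,j) = (\<Sum>t<m. A $$ (i,t) * B $$ (t,j))"
  using assms by (simp add: scalar_prod_def row_def col_def atLeast0LessThan)

lemma (in group) tens_mult:
  assumes r: "grep G k \<rho>" and r': "grep G k' \<rho>'" and h: "h \<in> carrier G" and g: "g \<in> carrier G"
    and rs: "r < k * k'" "s < k * k'"
  shows "(\<Sum>t<k*k'. tens \<rho> \<rho>' (m_inv G) k' h r t * tens \<rho> \<rho>' (m_inv G) k' g t s) = tens \<rho> \<rho>' (m_inv G) k' (h \<otimes> g) r s"
proof -
  have kk: "k' > 0" using rs by (cases "k' = 0") auto
  have rd: "r div k' < k" "s div k' < k" using rs by (auto simp: less_mult_imp_div_less)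
  have rm: "r mod k' < k'" "s mod k' < k'" using kk by auto
  have c: "\<rho> h \<in> carrier_mat k k" "\<rho> g \<in> carrier_mat k k" "\<rho>' (inv h) \<in> carrier_mat k' k'" "\<rho>' (inv g) \<in> carrier_mat k' k'"
    using r r' h g by (auto simp: grep_def)
  have "(\<Sum>t<k*k'. tens \<rho> \<rho>' (m_inv G) k' h r t * tens \<rho> \<rho>' (m_inv G) k' g t s)
     = (\<Sum>i<k. \<Sum>j<k'. (\<rho> h $$ (r div k', i) * \<rho> g $$ (i, s div k')) * (\<rho>' (inv g) $$ (s mod k', j) * \<rho>' (inv h) $$ (j, r mod k')))"
  proof -
    define F where "F = (\<lambda>i j. (\<rho> h $$ (r div k', i) * \<rho> g $$ (i, s div k')) * (\<rho>' (inv g) $$ (s mod k', j) * \<rho>' (inv h) $$ (j, r mod k')))"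
    have "(\<Sum>t<k*k'. tens \<rho> \<rho>' (m_inv G) k' h r t * tens \<rho> \<rho>' (m_inv G) k' g t s) = (\<Sum>t<k*k'. F (t div k') (t mod k'))"
      by (rule sum.cong) (simp_all add: tens_def F_def mult_ac)
    also have "\<dots> = (\<Sum>i<k. \<Sum>j<k'. F i j)" by (rule sum_div_mod)
    finally show ?thesis by (simp add: F_def)
  qed
  also have "\<dots> = (\<Sum>i<k. \<rho> h $$ (r div k', i) * \<rho> g $$ (i, s div k')) * (\<Sum>j<k'. \<rho>' (inv g) $$ (s mod k', j) * \<rho>' (inv h) $$ (j, r mod k'))"
    by (simp add: sum_product)
  also have "\<dots> = (\<rho> h * \<rho> g) $$ (r div k', s div k') * (\<rho>' (inv g) * \<rho>' (inv h)) $$ (s mod k', r mod k')"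
    by (subst mat_mult_entry[OF c(1) c(2) rd(1) rd(2)], subst mat_mult_entry[OF c(4) c(3) rm(2) rm(1)], rule refl)
  also have "\<rho> h * \<rho> g = \<rho> (h \<otimes> g)" using r h g by (simp add: grep_def)
  also have "\<rho>' (inv g) * \<rho>' (inv h) = \<rho>' (inv (h \<otimes> g))" using r' h g by (simp add: grep_def inv_mult_group)
  finally show ?thesis unfolding tens_def .
qed


lemma (in group) reindex_left:
  assumes h: "h \<in> carrier G"
  shows "(\<Sum>g\<in>carrier G. f (h \<otimes> g)) = (\<Sum>g\<in>carrier G. (f g :: complex))"
proof -
  have "(\<Sum>g\<in>carrier G. f g) = (\<Sum>g\<in>(\<lambda>x. h \<otimes> x) ` carrier G. f g)" using surj_const_mult[OF h] by simp
  also have "\<dots> = (\<Sum>g\<in>carrier G. f (h \<otimes> g))" by (subst sum.reindex[OF inj_on_cmult[OF h]]) simp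
  finally show ?thesis by simp
qed

lemma (in group) char_inner_nat:
  assumes fin: "finite (carrier G)" and r: "grep G k \<rho>" and r': "grep G k' \<rho>'"
  shows "\<exists>n::nat. (1 / of_nat (Coset.order G)) * (\<Sum>h\<in>carrier G. mtrace (\<rho> h) * cnj (mtrace (\<rho>' h))) = of_nat n"
proof -
  define K where "K = k * k'"
  define c :: complex where "c = 1 / of_nat (Coset.order G)"
  define T where "T = tens \<rho> \<rho>' (m_inv G) k'"
  define E where "E = mat K K (\<lambda>(r,s). c * (\<Sum>h\<in>carrier G. T h r s))"
  have ord: "Coset.order G > 0" using fin by (simp add: order_gt_0_iff_finite)
  have cG: "c * of_nat (Coset.order G) = 1" using ord by (simp add: c_def)
  have E: "E \<in> carrier_mat K K" by (simp add: E_def)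
  have EE: "E * E = E"
  proof (rule eq_matI)
    fix r s assume rs: "r < dim_row E" "s < dim_col E"
    then have rs': "r < K" "s < K" by (auto simp: E_def)
    have "(E * E) $$ (r,s) = (\<Sum>t<K. E $$ (r,t) * E $$ (t,s))"
      using mat_mult_entry[OF E E rs'] .
    also have "\<dots> = (\<Sum>t<K. (c * (\<Sum>h\<in>carrier G. T h r t)) * (c * (\<Sum>g\<in>carrier G. T g t s)))"
      using rs' by (intro sum.cong) (auto simp: E_def)
    also have "\<dots> = c * c * (\<Sum>h\<in>carrier G. \<Sum>g\<in>carrier G. \<Sum>t<K. T h r t * T g t s)"
      by (simp add: sum_distrib_left sum_distrib_right mult_ac sum.swap[of _ "{..<K}"])
    also have "\<dots> = c * c * (\<Sum>h\<in>carrier G. \<Sum>g\<in>carrier G. T (h \<otimes> g) r s)"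
      using rs' by (intro arg_cong[where f = "\<lambda>x. c * c * x"] sum.cong refl)
        (simp add: T_def K_def tens_mult[OF r r'])
    also have "\<dots> = c * c * (\<Sum>h\<in>carrier G. \<Sum>g\<in>carrier G. T g r s)"
      by (intro arg_cong[where f = "\<lambda>x. c * c * x"] sum.cong refl reindex_left) 
    also have "\<dots> = c * (c * of_nat (Coset.order G)) * (\<Sum>g\<in>carrier G. T g r s)"
      by (simp add: Coset.order_def mult_ac)
    also have "\<dots> = E $$ (r,s)" using rs' cG by (simp add: E_def)
    finally show "(E * E) $$ (r,s) = E $$ (r,s)" .
  qed (auto simp: E_def)
  obtain m where m: "mtrace E = of_nat m" using idempotent_trace_nat[OF E EE] by blast
  have tr: "(\<Sum>r<K. T h r r) = mtrace (\<rho> h) * cnj (mtrace (\<rho>' h))" if h: "h \<in> carrier G" for h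
  proof -
    have "(\<Sum>r<K. T h r r) = (\<Sum>r<k*k'. (\<lambda>i j. \<rho> h $$ (i,i) * \<rho>' (inv h) $$ (j,j)) (r div k') (r mod k'))"
      by (simp add: T_def K_def tens_def)
    also have "\<dots> = (\<Sum>i<k. \<Sum>j<k'. \<rho> h $$ (i,i) * \<rho>' (inv h) $$ (j,j))" by (rule sum_div_mod)
    also have "\<dots> = mtrace (\<rho> h) * mtrace (\<rho>' (inv h))"
    proof -
      have "\<rho> h \<in> carrier_mat k k" "\<rho>' (inv h) \<in> carrier_mat k' k'" using r r' h by (auto simp: grep_def)
      then show ?thesis by (simp add: mtrace_def sum_product)
    qed
    also have "mtrace (\<rho>' (inv h)) = cnj (mtrace (\<rho>' h))" using grep_cnj[OF fin r' h] by simp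
    finally show ?thesis .
  qed
  have "mtrace E = (\<Sum>r<K. c * (\<Sum>h\<in>carrier G. T h r r))" by (simp add: mtrace_def E_def)
  also have "\<dots> = c * (\<Sum>h\<in>carrier G. \<Sum>r<K. T h r r)" by (simp add: sum_distrib_left sum.swap[of _ "{..<K}"])
  also have "\<dots> = c * (\<Sum>h\<in>carrier G. mtrace (\<rho> h) * cnj (mtrace (\<rho>' h)))" using tr by simp
  finally have "of_nat m = c * (\<Sum>h\<in>carrier G. mtrace (\<rho> h) * cnj (mtrace (\<rho>' h)))" using m by simp
  then show ?thesis unfolding c_def by metis
qed

locale fic =
  fixes C :: "('o, 'm) cat"
  assumes FI: "FI_type C"
begin

abbreviation "Ob \<equiv> cOb C"
abbreviation "Hom \<equiv> cHom C"
abbreviation "cmp \<equiv> ccomp C"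
abbreviation "idm \<equiv> cid C"

lemma cat: "is_category C" using FI by (simp add: FI_type_def)
lemma FIc: "(\<forall>c\<in>Ob. \<forall>d\<in>Ob. finite (Hom c d))"
     "(\<forall>c\<in>Ob. \<forall>d\<in>Ob. \<forall>f\<in>Hom c d. is_mono C c d f)"
     "(\<forall>d\<in>Ob. \<forall>f\<in>Hom d d. Defs.is_iso C d d f)"
     "(\<forall>c\<in>Ob. \<forall>d\<in>Ob. \<forall>f\<in>Hom c d. \<forall>g\<in>Hom c d. \<exists>\<sigma>\<in>Aut C d. cmp \<sigma> f = g)"
     "(\<forall>d\<in>Ob. \<exists>F. finite F \<and> F \<subseteq> Ob \<and> (\<forall>c\<in>Ob. Hom c d \<noteq> {} \<longrightarrow> (\<exists>c'\<in>F. isomorphic C c c')))"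
     "(\<forall>c1\<in>Ob. \<forall>c2\<in>Ob. \<forall>d\<in>Ob. \<forall>g1\<in>Hom c1 d. \<forall>g2\<in>Hom c2 d.
        \<exists>p\<in>Ob. \<exists>f1 f2. is_pullback_square C p c1 c2 d f1 f2 g1 g2)"
     "(\<forall>p\<in>Ob. \<forall>c1\<in>Ob. \<forall>c2\<in>Ob. \<forall>f1\<in>Hom p c1. \<forall>f2\<in>Hom p c2.
        \<exists>d g1 g2. is_weak_pushout C p c1 c2 f1 f2 d g1 g2)"
  using FI unfolding FI_type_def by auto

lemma id_hom[simp]: "a \<in> Ob \<Longrightarrow> idm a \<in> Hom a a"
  using cat by (simp add: is_category_def)

lemma comp_hom[intro]: "a \<in> Ob \<Longrightarrow> b \<in> Ob \<Longrightarrow> c \<in> Ob \<Longrightarrow> f \<in> Hom a b \<Longrightarrow> g \<in> Hom b c \<Longrightarrow> cmp g f \<in> Hom a c"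
  using cat unfolding is_category_def by blast

lemma id_l[simp]: "a \<in> Ob \<Longrightarrow> b \<in> Ob \<Longrightarrow> f \<in> Hom a b \<Longrightarrow> cmp (idm b) f = f"
  using cat unfolding is_category_def by blast

lemma id_r[simp]: "a \<in> Ob \<Longrightarrow> b \<in> Ob \<Longrightarrow> f \<in> Hom a b \<Longrightarrow> cmp f (idm a) = f"
  using cat unfolding is_category_def by blast

lemma assoc: "a \<in> Ob \<Longrightarrow> b \<in> Ob \<Longrightarrow> c \<in> Ob \<Longrightarrow> d \<in> Ob \<Longrightarrow> f \<in> Hom a b \<Longrightarrow> g \<in> Hom b c \<Longrightarrow> h \<in> Hom c d
   \<Longrightarrow> cmp h (cmp g f) = cmp (cmp h g) f"
  using cat unfolding is_category_def by blast

lemma fin_hom: "a \<in> Ob \<Longrightarrow> b \<in> Ob \<Longrightarrow> finite (Hom a b)"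
  using FIc(1) by blast

lemma mono: "a \<in> Ob \<Longrightarrow> b \<in> Ob \<Longrightarrow> e \<in> Ob \<Longrightarrow> f \<in> Hom a b \<Longrightarrow> g \<in> Hom e a \<Longrightarrow> h \<in> Hom e a
   \<Longrightarrow> cmp f g = cmp f h \<Longrightarrow> g = h"
  using FIc(2) unfolding is_mono_def by blast

lemma Aut_eq: "d \<in> Ob \<Longrightarrow> Aut C d = Hom d d"
  using FIc(3) unfolding Aut_def Defs.is_iso_def by blast

lemma endo_inv: "d \<in> Ob \<Longrightarrow> s \<in> Hom d d \<Longrightarrow> \<exists>t\<in>Hom d d. cmp t s = idm d \<and> cmp s t = idm d"
  using FIc(3) unfolding Defs.is_iso_def by blast

lemma trans_act: "c \<in> Ob \<Longrightarrow> d \<in> Ob \<Longrightarrow> f \<in> Hom c d \<Longrightarrow> g \<in> Hom c d \<Longrightarrow> \<exists>s\<in>Hom d d. cmp s f = g"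
  using FIc(4) Aut_eq by metis

lemma pullback_ex: "c1 \<in> Ob \<Longrightarrow> c2 \<in> Ob \<Longrightarrow> d \<in> Ob \<Longrightarrow> g1 \<in> Hom c1 d \<Longrightarrow> g2 \<in> Hom c2 d \<Longrightarrow>
   \<exists>p\<in>Ob. \<exists>f1 f2. is_pullback_square C p c1 c2 d f1 f2 g1 g2"
  using FIc(6) by blast

lemma wpo_ex: "p \<in> Ob \<Longrightarrow> c1 \<in> Ob \<Longrightarrow> c2 \<in> Ob \<Longrightarrow> f1 \<in> Hom p c1 \<Longrightarrow> f2 \<in> Hom p c2 \<Longrightarrow>
   \<exists>d g1 g2. is_weak_pushout C p c1 c2 f1 f2 d g1 g2"
  using FIc(7) by blast

definition AG :: "'o \<Rightarrow> 'm monoid" where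
  "AG d = \<lparr>carrier = Hom d d, mult = cmp, one = idm d\<rparr>"

lemma AG_group: "d \<in> Ob \<Longrightarrow> Group.group (AG d)"
proof (rule groupI)
  assume d: "d \<in> Ob"
  show "\<And>x y. x \<in> carrier (AG d) \<Longrightarrow> y \<in> carrier (AG d) \<Longrightarrow> x \<otimes>\<^bsub>AG d\<^esub> y \<in> carrier (AG d)"
    using d by (auto simp: AG_def)
  show "\<one>\<^bsub>AG d\<^esub> \<in> carrier (AG d)" using d by (simp add: AG_def)
  show "\<And>x y z. x \<in> carrier (AG d) \<Longrightarrow> y \<in> carrier (AG d) \<Longrightarrow> z \<in> carrier (AG d) \<Longrightarrow>
        x \<otimes>\<^bsub>AG d\<^esub> y \<otimes>\<^bsub>AG d\<^esub> z = x \<otimes>\<^bsub>AG d\<^esub> (y \<otimes>\<^bsub>AG d\<^esub> z)"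
    using d by (auto simp: AG_def assoc)
  show "\<And>x. x \<in> carrier (AG d) \<Longrightarrow> \<one>\<^bsub>AG d\<^esub> \<otimes>\<^bsub>AG d\<^esub> x = x"
    using d by (simp add: AG_def)
  show "\<And>x. x \<in> carrier (AG d) \<Longrightarrow> \<exists>y\<in>carrier (AG d). y \<otimes>\<^bsub>AG d\<^esub> x = \<one>\<^bsub>AG d\<^esub>"
    using d endo_inv by (fastforce simp: AG_def)
qed

definition iv :: "'o \<Rightarrow> 'm \<Rightarrow> 'm" where "iv d s = inv\<^bsub>AG d\<^esub> s"

lemma iv_hom[simp]: "d \<in> Ob \<Longrightarrow> s \<in> Hom d d \<Longrightarrow> iv d s \<in> Hom d d"
  using group.inv_closed[OF AG_group, of d s] by (simp add: iv_def AG_def)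

lemma iv_l[simp]: "d \<in> Ob \<Longrightarrow> s \<in> Hom d d \<Longrightarrow> cmp (iv d s) s = idm d"
  using group.l_inv[OF AG_group, of d s] by (simp add: iv_def AG_def)

lemma iv_r[simp]: "d \<in> Ob \<Longrightarrow> s \<in> Hom d d \<Longrightarrow> cmp s (iv d s) = idm d"
  using group.r_inv[OF AG_group, of d s] by (simp add: iv_def AG_def)

end

context fic begin

lemma pb_transport:
  assumes ob: "p \<in> Ob" "a \<in> Ob" "b \<in> Ob" "w \<in> Ob" "d \<in> Ob"
    and u: "u \<in> Hom w d" and g: "g1 \<in> Hom a w" "g2 \<in> Hom b w"
  shows "is_pullback_square C p a b w f1 f2 g1 g2 \<longleftrightarrow> is_pullback_square C p a b d f1 f2 (cmp u g1) (cmp u g2)"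
proof -
  have ug: "cmp u g1 \<in> Hom a d" "cmp u g2 \<in> Hom b d" using ob u g by auto
  have eq: "cmp (cmp u g1) h1 = cmp (cmp u g2) h2 \<longleftrightarrow> cmp g1 h1 = cmp g2 h2"
    if z: "z \<in> Ob" "h1 \<in> Hom z a" "h2 \<in> Hom z b" for z h1 h2
  proof -
    have "cmp (cmp u g1) h1 = cmp u (cmp g1 h1)" using assoc[of z a w d h1 g1 u] ob z u g by simp
    moreover have "cmp (cmp u g2) h2 = cmp u (cmp g2 h2)" using assoc[of z b w d h2 g2 u] ob z u g by simp
    moreover have "cmp u (cmp g1 h1) = cmp u (cmp g2 h2) \<longleftrightarrow> cmp g1 h1 = cmp g2 h2"
      using mono[of w d z u "cmp g1 h1" "cmp g2 h2"] ob z u g by auto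
    ultimately show ?thesis by simp
  qed
  show ?thesis
  proof
    assume A: "is_pullback_square C p a b w f1 f2 g1 g2"
    then have f: "f1 \<in> Hom p a" "f2 \<in> Hom p b" by (auto simp: is_pullback_square_def)
    show "is_pullback_square C p a b d f1 f2 (cmp u g1) (cmp u g2)"
      using A eq[OF ob(1) f] ug eq unfolding is_pullback_square_def by auto
  next
    assume A: "is_pullback_square C p a b d f1 f2 (cmp u g1) (cmp u g2)"
    then have f: "f1 \<in> Hom p a" "f2 \<in> Hom p b" by (auto simp: is_pullback_square_def)
    show "is_pullback_square C p a b w f1 f2 g1 g2"
      using A eq[OF ob(1) f] g eq unfolding is_pullback_square_def by auto
  qed
qed

lemma iso_pre_eq:
  assumes ob: "z \<in> Ob" "p \<in> Ob" "a \<in> Ob" and al: "\<alpha> \<in> Hom a a" and f1: "f1 \<in> Hom p a"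
    and h: "h \<in> Hom z p" and h1: "h1 \<in> Hom z a"
  shows "cmp (cmp (iv a \<alpha>) f1) h = h1 \<longleftrightarrow> cmp f1 h = cmp \<alpha> h1"
proof -
  have ia: "iv a \<alpha> \<in> Hom a a" using ob al by simp
  have fh: "cmp f1 h \<in> Hom z a" using ob f1 h by auto
  have e1: "cmp (cmp (iv a \<alpha>) f1) h = cmp (iv a \<alpha>) (cmp f1 h)" using assoc[of z p a a h f1 "iv a \<alpha>"] ob ia f1 h by simp
  show ?thesis
  proof
    assume "cmp (cmp (iv a \<alpha>) f1) h = h1"
    then have "cmp (iv a \<alpha>) (cmp f1 h) = h1" using e1 by simp
    then have "cmp \<alpha> (cmp (iv a \<alpha>) (cmp f1 h)) = cmp \<alpha> h1" by simp
    moreover have "cmp \<alpha> (cmp (iv a \<alpha>) (cmp f1 h)) = cmp f1 h"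
      using assoc[of z a a a "cmp f1 h" "iv a \<alpha>" \<alpha>] ob ia al fh by simp
    ultimately show "cmp f1 h = cmp \<alpha> h1" by simp
  next
    assume "cmp f1 h = cmp \<alpha> h1"
    then have "cmp (cmp (iv a \<alpha>) f1) h = cmp (iv a \<alpha>) (cmp \<alpha> h1)" using e1 by simp
    also have "\<dots> = h1" using assoc[of z a a a h1 \<alpha> "iv a \<alpha>"] ob ia al h1 by simp
    finally show "cmp (cmp (iv a \<alpha>) f1) h = h1" .
  qed
qed

lemma pb_aut:
  assumes ob: "p \<in> Ob" "a \<in> Ob" "b \<in> Ob" "d \<in> Ob"
    and P: "is_pullback_square C p a b d f1 f2 f g"
    and al: "\<alpha> \<in> Hom a a" and be: "\<beta> \<in> Hom b b"
  shows "is_pullback_square C p a b d (cmp (iv a \<alpha>) f1) (cmp (iv b \<beta>) f2) (cmp f \<alpha>) (cmp g \<beta>)"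
proof -
  from P have f: "f1 \<in> Hom p a" "f2 \<in> Hom p b" "f \<in> Hom a d" "g \<in> Hom b d" and cm: "cmp f f1 = cmp g f2"
    and U: "\<forall>z\<in>Ob. \<forall>h1\<in>Hom z a. \<forall>h2\<in>Hom z b. cmp f h1 = cmp g h2 \<longrightarrow>
        (\<exists>!h. h \<in> Hom z p \<and> cmp f1 h = h1 \<and> cmp f2 h = h2)"
    by (auto simp: is_pullback_square_def)
  have ia: "iv a \<alpha> \<in> Hom a a" "iv b \<beta> \<in> Hom b b" using ob al be by auto
  have h1: "cmp (iv a \<alpha>) f1 \<in> Hom p a" "cmp (iv b \<beta>) f2 \<in> Hom p b" "cmp f \<alpha> \<in> Hom a d" "cmp g \<beta> \<in> Hom b d"
    using ob f ia al be by auto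
  have c1: "cmp (cmp f \<alpha>) (cmp (iv a \<alpha>) f1) = cmp f f1"
  proof -
    have "cmp (cmp f \<alpha>) (cmp (iv a \<alpha>) f1) = cmp f (cmp \<alpha> (cmp (iv a \<alpha>) f1))"
      using assoc[of p a a d "cmp (iv a \<alpha>) f1" \<alpha> f] ob h1 al f by simp
    also have "cmp \<alpha> (cmp (iv a \<alpha>) f1) = f1"
      using assoc[of p a a a f1 "iv a \<alpha>" \<alpha>] ob ia al f by simp
    finally show ?thesis .
  qed
  have c2: "cmp (cmp g \<beta>) (cmp (iv b \<beta>) f2) = cmp g f2"
  proof -
    have "cmp (cmp g \<beta>) (cmp (iv b \<beta>) f2) = cmp g (cmp \<beta> (cmp (iv b \<beta>) f2))"
      using assoc[of p b b d "cmp (iv b \<beta>) f2" \<beta> g] ob h1 be f by simp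
    also have "cmp \<beta> (cmp (iv b \<beta>) f2) = f2"
      using assoc[of p b b b f2 "iv b \<beta>" \<beta>] ob ia be f by simp
    finally show ?thesis .
  qed
  have univ: "\<exists>!h. h \<in> Hom z p \<and> cmp (cmp (iv a \<alpha>) f1) h = k1 \<and> cmp (cmp (iv b \<beta>) f2) h = k2"
    if z: "z \<in> Ob" "k1 \<in> Hom z a" "k2 \<in> Hom z b" and e: "cmp (cmp f \<alpha>) k1 = cmp (cmp g \<beta>) k2" for z k1 k2
  proof -
    have ak: "cmp \<alpha> k1 \<in> Hom z a" "cmp \<beta> k2 \<in> Hom z b" using z ob al be by auto
    have "cmp f (cmp \<alpha> k1) = cmp g (cmp \<beta> k2)"
      using e assoc[of z a a d k1 \<alpha> f] assoc[of z b b d k2 \<beta> g] z ob al be f by simp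
    then have "\<exists>!h. h \<in> Hom z p \<and> cmp f1 h = cmp \<alpha> k1 \<and> cmp f2 h = cmp \<beta> k2" using U z ak by blast
    moreover have "h \<in> Hom z p \<Longrightarrow> (cmp (cmp (iv a \<alpha>) f1) h = k1 \<longleftrightarrow> cmp f1 h = cmp \<alpha> k1)" for h
      using iso_pre_eq[OF z(1) ob(1) ob(2) al f(1) _ z(2)] by simp
    moreover have "h \<in> Hom z p \<Longrightarrow> (cmp (cmp (iv b \<beta>) f2) h = k2 \<longleftrightarrow> cmp f2 h = cmp \<beta> k2)" for h
      using iso_pre_eq[OF z(1) ob(1) ob(3) be f(2) _ z(3)] by simp
    ultimately show ?thesis by metis
  qed
  show ?thesis unfolding is_pullback_square_def using h1 c1 c2 cm univ by auto
qed

lemma pb_same_span_orbit: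
  assumes ob: "p \<in> Ob" "a \<in> Ob" "b \<in> Ob" "d \<in> Ob"
    and P: "is_pullback_square C p a b d f1 f2 f g"
    and P': "is_pullback_square C p a b d f1 f2 f' g'"
  shows "\<exists>s\<in>Hom d d. cmp s f = f' \<and> cmp s g = g'"
proof -
  from P have f: "f1 \<in> Hom p a" "f2 \<in> Hom p b" by (auto simp: is_pullback_square_def)
  obtain w g1 g2 where W: "is_weak_pushout C p a b f1 f2 w g1 g2" using wpo_ex[OF ob(1-3) f] by blast
  then have w: "w \<in> Ob" and g: "g1 \<in> Hom a w" "g2 \<in> Hom b w"
    and U: "\<forall>z\<in>Ob. \<forall>h1 h2. is_pullback_square C p a b z f1 f2 h1 h2 \<longrightarrow>
        (\<exists>!h. h \<in> Hom w z \<and> cmp h g1 = h1 \<and> cmp h g2 = h2)"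
    by (auto simp: is_weak_pushout_def is_pullback_square_def)
  obtain u where u: "u \<in> Hom w d" "cmp u g1 = f" "cmp u g2 = g" using U ob P by blast
  obtain u' where u': "u' \<in> Hom w d" "cmp u' g1 = f'" "cmp u' g2 = g'" using U ob P' by blast
  obtain s where s: "s \<in> Hom d d" "cmp s u = u'" using trans_act[OF w ob(4) u(1) u'(1)] by blast
  have "cmp s f = f'" using assoc[of a w d d g1 u s] ob w g u s u' by simp
  moreover have "cmp s g = g'" using assoc[of b w d d g2 u s] ob w g u s u' by simp
  ultimately show ?thesis using s by blast
qed

lemma pb_switch:
  assumes ob: "p \<in> Ob" "q \<in> Ob" "a \<in> Ob" "b \<in> Ob" "d \<in> Ob" "d' \<in> Ob"
    and P1: "is_pullback_square C p a b d f1 f2 f g"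
    and P2: "is_pullback_square C q a b d k1 k2 f g"
    and P3: "is_pullback_square C q a b d' k1 k2 f' g'"
  shows "is_pullback_square C p a b d' f1 f2 f' g'"
proof -
  from P2 have k: "k1 \<in> Hom q a" "k2 \<in> Hom q b" by (auto simp: is_pullback_square_def)
  obtain w g1 g2 where W: "is_weak_pushout C q a b k1 k2 w g1 g2" using wpo_ex[OF ob(2-4) k] by blast
  then have w: "w \<in> Ob" and g: "g1 \<in> Hom a w" "g2 \<in> Hom b w"
    and U: "\<forall>z\<in>Ob. \<forall>h1 h2. is_pullback_square C q a b z k1 k2 h1 h2 \<longrightarrow>
        (\<exists>!h. h \<in> Hom w z \<and> cmp h g1 = h1 \<and> cmp h g2 = h2)"
    by (auto simp: is_weak_pushout_def is_pullback_square_def)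
  obtain u where u: "u \<in> Hom w d" "cmp u g1 = f" "cmp u g2 = g" using U ob P2 by blast
  obtain v where v: "v \<in> Hom w d'" "cmp v g1 = f'" "cmp v g2 = g'" using U ob P3 by blast
  have "is_pullback_square C p a b w f1 f2 g1 g2"
    using pb_transport[OF ob(1,3,4) w ob(5) u(1) g] P1 u by simp
  then show ?thesis
    using pb_transport[OF ob(1,3,4) w ob(6) v(1) g] v by simp
qed


lemma pb_core:
  assumes ob: "p \<in> Ob" "q \<in> Ob" "a \<in> Ob" "b \<in> Ob" "d \<in> Ob" "d' \<in> Ob"
    and P1: "is_pullback_square C p a b d f1 f2 f g"
    and P2: "is_pullback_square C p a b d' f1 f2 fy gy"
    and P3: "is_pullback_square C q a b d k1 k2 (cmp s f) (cmp s g)"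
    and P4: "is_pullback_square C q a b d' k1 k2 fy' gy'"
    and s: "s \<in> Hom d d"
  shows "\<exists>s'\<in>Hom d' d'. cmp s' fy = fy' \<and> cmp s' gy = gy'"
proof -
  from P1 have fg: "f \<in> Hom a d" "g \<in> Hom b d" by (auto simp: is_pullback_square_def)
  have "is_pullback_square C p a b d f1 f2 (cmp s f) (cmp s g)"
    using pb_transport[OF ob(1,3,4) ob(5) ob(5) s fg] P1 by simp
  then have "is_pullback_square C p a b d' f1 f2 fy' gy'"
    using pb_switch[OF ob(1,2,3,4,5,6) _ P3 P4] by blast
  then show ?thesis using pb_same_span_orbit[OF ob(1,3,4,6) P2] by blast
qed

lemma pb_cancel_legs:
  assumes ob: "p \<in> Ob" "a \<in> Ob" "b \<in> Ob" "c1 \<in> Ob" "c2 \<in> Ob" "w \<in> Ob"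
    and k: "k1 \<in> Hom a c1" "k2 \<in> Hom b c2" and f: "f1 \<in> Hom p a" "f2 \<in> Hom p b"
    and P: "is_pullback_square C p c1 c2 w (cmp k1 f1) (cmp k2 f2) g1 g2"
  shows "is_pullback_square C p a b w f1 f2 (cmp g1 k1) (cmp g2 k2)"
proof -
  from P have g: "g1 \<in> Hom c1 w" "g2 \<in> Hom c2 w" and cm: "cmp g1 (cmp k1 f1) = cmp g2 (cmp k2 f2)"
    and U: "\<forall>z\<in>Ob. \<forall>h1\<in>Hom z c1. \<forall>h2\<in>Hom z c2. cmp g1 h1 = cmp g2 h2 \<longrightarrow>
        (\<exists>!h. h \<in> Hom z p \<and> cmp (cmp k1 f1) h = h1 \<and> cmp (cmp k2 f2) h = h2)"
    by (auto simp: is_pullback_square_def)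
  have gk: "cmp g1 k1 \<in> Hom a w" "cmp g2 k2 \<in> Hom b w" using ob g k by auto
  have c: "cmp (cmp g1 k1) f1 = cmp (cmp g2 k2) f2"
    using cm assoc[of p a c1 w f1 k1 g1] assoc[of p b c2 w f2 k2 g2] ob g k f by simp
  have univ: "\<exists>!h. h \<in> Hom z p \<and> cmp f1 h = h1 \<and> cmp f2 h = h2"
    if z: "z \<in> Ob" "h1 \<in> Hom z a" "h2 \<in> Hom z b" and e: "cmp (cmp g1 k1) h1 = cmp (cmp g2 k2) h2" for z h1 h2
  proof -
    have kh: "cmp k1 h1 \<in> Hom z c1" "cmp k2 h2 \<in> Hom z c2" using z ob k by auto
    have "cmp g1 (cmp k1 h1) = cmp g2 (cmp k2 h2)"
      using e assoc[of z a c1 w h1 k1 g1] assoc[of z b c2 w h2 k2 g2] z ob g k by simp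
    then have ex: "\<exists>!h. h \<in> Hom z p \<and> cmp (cmp k1 f1) h = cmp k1 h1 \<and> cmp (cmp k2 f2) h = cmp k2 h2"
      using U z kh by blast
    have e1: "h \<in> Hom z p \<Longrightarrow> (cmp (cmp k1 f1) h = cmp k1 h1 \<longleftrightarrow> cmp f1 h = h1)" for h
      using assoc[of z p a c1 h f1 k1] mono[of a c1 z k1 "cmp f1 h" h1] z ob k f by auto
    have e2: "h \<in> Hom z p \<Longrightarrow> (cmp (cmp k2 f2) h = cmp k2 h2 \<longleftrightarrow> cmp f2 h = h2)" for h
      using assoc[of z p b c2 h f2 k2] mono[of b c2 z k2 "cmp f2 h" h2] z ob k f by auto
    show ?thesis using ex e1 e2 by metis
  qed
  show ?thesis unfolding is_pullback_square_def using f gk c univ by auto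
qed

lemma pb_exists_ge:
  assumes ob: "a \<in> Ob" "b \<in> Ob" "c1 \<in> Ob" "c2 \<in> Ob" "d' \<in> Ob" "p \<in> Ob"
    and k: "k1 \<in> Hom a c1" "k2 \<in> Hom b c2" and f: "f1 \<in> Hom p a" "f2 \<in> Hom p b"
    and ge: "obj_ge_sum C d' c1 c2"
  shows "\<exists>y1\<in>Hom a d'. \<exists>y2\<in>Hom b d'. is_pullback_square C p a b d' f1 f2 y1 y2"
proof -
  have kf: "cmp k1 f1 \<in> Hom p c1" "cmp k2 f2 \<in> Hom p c2" using ob k f by auto
  obtain w g1 g2 where W: "is_weak_pushout C p c1 c2 (cmp k1 f1) (cmp k2 f2) w g1 g2"
    using wpo_ex[OF ob(6) ob(3,4) kf] by blast
  then have w: "w \<in> Ob" and P: "is_pullback_square C p c1 c2 w (cmp k1 f1) (cmp k2 f2) g1 g2"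
    by (auto simp: is_weak_pushout_def)
  from P have g: "g1 \<in> Hom c1 w" "g2 \<in> Hom c2 w" by (auto simp: is_pullback_square_def)
  from ge W ob kf have "obj_le C w d'" unfolding obj_ge_sum_def by blast
  then obtain v where v: "v \<in> Hom w d'" by (auto simp: obj_le_def)
  have P2: "is_pullback_square C p a b w f1 f2 (cmp g1 k1) (cmp g2 k2)"
    using pb_cancel_legs[OF ob(6,1,2,3,4) w k f P] .
  have gk: "cmp g1 k1 \<in> Hom a w" "cmp g2 k2 \<in> Hom b w" using ob g k w by auto
  have "is_pullback_square C p a b d' f1 f2 (cmp v (cmp g1 k1)) (cmp v (cmp g2 k2))"
    using pb_transport[OF ob(6,1,2) w ob(5) v gk] P2 by simp
  moreover have "cmp v (cmp g1 k1) \<in> Hom a d'" "cmp v (cmp g2 k2) \<in> Hom b d'" using gk v ob w by auto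
  ultimately show ?thesis by blast
qed

end

lemma group_action_intro:
  assumes G: "Group.group G"
    and cl: "\<And>g x. g \<in> carrier G \<Longrightarrow> x \<in> E \<Longrightarrow> act g x \<in> E"
    and one: "\<And>x. x \<in> E \<Longrightarrow> act \<one>\<^bsub>G\<^esub> x = x"
    and mul: "\<And>g h x. g \<in> carrier G \<Longrightarrow> h \<in> carrier G \<Longrightarrow> x \<in> E \<Longrightarrow> act (g \<otimes>\<^bsub>G\<^esub> h) x = act g (act h x)"
  shows "group_action G E (\<lambda>g. \<lambda>x\<in>E. act g x)"
proof -
  interpret G: group G by (rule G)
  have bij: "(\<lambda>x\<in>E. act g x) \<in> Bij E" if g: "g \<in> carrier G" for g
  proof -
    have ig: "inv\<^bsub>G\<^esub> g \<in> carrier G" using g by simp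
    have "bij_betw (\<lambda>x\<in>E. act g x) E E"
    proof (rule bij_betw_byWitness[where f' = "\<lambda>x. act (inv\<^bsub>G\<^esub> g) x"])
      show "\<forall>x\<in>E. act (inv\<^bsub>G\<^esub> g) ((\<lambda>x\<in>E. act g x) x) = x"
        using g ig mul[OF ig g] one by (simp add: G.l_inv)
      show "\<forall>x\<in>E. (\<lambda>x\<in>E. act g x) (act (inv\<^bsub>G\<^esub> g) x) = x"
        using g ig mul[OF g ig] one cl by (simp add: G.r_inv)
      show "(\<lambda>x\<in>E. act g x) ` E \<subseteq> E" using cl g by auto
      show "(\<lambda>x. act (inv\<^bsub>G\<^esub> g) x) ` E \<subseteq> E" using cl ig by auto
    qed
    then show ?thesis by (simp add: Bij_def)
  qed
  show ?thesis
    unfolding group_action_def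
  proof (rule group_hom.intro[OF G group_BijGroup], rule group_hom_axioms.intro, rule homI)
    show "\<And>g. g \<in> carrier G \<Longrightarrow> (\<lambda>x\<in>E. act g x) \<in> carrier (BijGroup E)"
      using bij by (simp add: BijGroup_def)
    show "(\<lambda>x\<in>E. act (g \<otimes>\<^bsub>G\<^esub> h) x) = (\<lambda>x\<in>E. act g x) \<otimes>\<^bsub>BijGroup E\<^esub> (\<lambda>x\<in>E. act h x)"
      if "g \<in> carrier G" "h \<in> carrier G" for g h
      using that bij mul cl by (auto simp: BijGroup_def compose_def)
  qed
qed

context fic begin

lemma hom_dd_comp[simp]: "a \<in> Ob \<Longrightarrow> d \<in> Ob \<Longrightarrow> s \<in> Hom d d \<Longrightarrow> f \<in> Hom a d \<Longrightarrow> cmp s f \<in> Hom a d"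
  by (rule comp_hom[of a d d]) auto

lemma hom_comp_aa[simp]: "a \<in> Ob \<Longrightarrow> d \<in> Ob \<Longrightarrow> f \<in> Hom a d \<Longrightarrow> al \<in> Hom a a \<Longrightarrow> cmp f al \<in> Hom a d"
  by (rule comp_hom[of a a d]) auto

definition Big :: "'o \<Rightarrow> 'o \<Rightarrow> 'o \<Rightarrow> ('m \<times> 'm \<times> 'm) monoid" where
  "Big d a b = AG d \<times>\<times> (AG a \<times>\<times> AG b)"

definition EE :: "'o \<Rightarrow> 'o \<Rightarrow> 'o \<Rightarrow> ('m \<times> 'm) set" where
  "EE d a b = Hom a d \<times> Hom b d"

definition act :: "'o \<Rightarrow> 'o \<Rightarrow> 'o \<Rightarrow> ('m \<times> 'm \<times> 'm) \<Rightarrow> ('m \<times> 'm) \<Rightarrow> ('m \<times> 'm)" where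
  "act d a b \<gamma> x = (cmp (cmp (fst \<gamma>) (fst x)) (iv a (fst (snd \<gamma>))), cmp (cmp (fst \<gamma>) (snd x)) (iv b (snd (snd \<gamma>))))"

definition phi where "phi d a b = (\<lambda>\<gamma>. \<lambda>x\<in>EE d a b. act d a b \<gamma> x)"

lemma Big_group: "d \<in> Ob \<Longrightarrow> a \<in> Ob \<Longrightarrow> b \<in> Ob \<Longrightarrow> Group.group (Big d a b)"
  unfolding Big_def by (intro DirProd_group AG_group)

lemma carrier_Big: "carrier (Big d a b) = Hom d d \<times> Hom a a \<times> Hom b b"
  by (simp add: Big_def AG_def)

lemma one_Big: "\<one>\<^bsub>Big d a b\<^esub> = (idm d, idm a, idm b)"
  by (simp add: Big_def AG_def)

lemma mult_Big: "x \<otimes>\<^bsub>Big d a b\<^esub> y = (cmp (fst x) (fst y), cmp (fst (snd x)) (fst (snd y)), cmp (snd (snd x)) (snd (snd y)))"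
  by (simp add: Big_def AG_def mult_DirProd')

lemma iv_id: "a \<in> Ob \<Longrightarrow> iv a (idm a) = idm a"
  using group.inv_equality[OF AG_group, of a "idm a" "idm a"] by (simp add: iv_def AG_def)

lemma iv_mult: "a \<in> Ob \<Longrightarrow> x \<in> Hom a a \<Longrightarrow> y \<in> Hom a a \<Longrightarrow> iv a (cmp x y) = cmp (iv a y) (iv a x)"
  using group.inv_mult_group[OF AG_group, of a x y] by (simp add: iv_def AG_def)

lemma iv_iv: "a \<in> Ob \<Longrightarrow> x \<in> Hom a a \<Longrightarrow> iv a (iv a x) = x"
  using group.inv_inv[OF AG_group, of a x] by (simp add: iv_def AG_def)

lemma act_closed:
  assumes ob: "d \<in> Ob" "a \<in> Ob" "b \<in> Ob" and g: "\<gamma> \<in> carrier (Big d a b)" and x: "x \<in> EE d a b"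
  shows "act d a b \<gamma> x \<in> EE d a b"
  using assms by (auto simp: carrier_Big EE_def act_def)

lemma comp3:
  assumes ob: "a \<in> Ob" "d \<in> Ob" and s: "s \<in> Hom d d" and f: "f \<in> Hom a d" and al: "al \<in> Hom a a"
  shows "cmp (cmp s f) al = cmp s (cmp f al)"
  using assoc[of a a d d al f s] assms by simp

lemma act_mult:
  assumes ob: "d \<in> Ob" "a \<in> Ob" "b \<in> Ob" and g: "\<gamma> \<in> carrier (Big d a b)" and h: "\<eta> \<in> carrier (Big d a b)"
    and x: "x \<in> EE d a b"
  shows "act d a b (\<gamma> \<otimes>\<^bsub>Big d a b\<^esub> \<eta>) x = act d a b \<gamma> (act d a b \<eta> x)"
proof -
  obtain s1 p1 q1 where g': "\<gamma> = (s1,p1,q1)" "s1 \<in> Hom d d" "p1 \<in> Hom a a" "q1 \<in> Hom b b"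
    using g by (auto simp: carrier_Big)
  obtain s2 p2 q2 where h': "\<eta> = (s2,p2,q2)" "s2 \<in> Hom d d" "p2 \<in> Hom a a" "q2 \<in> Hom b b"
    using h by (auto simp: carrier_Big)
  obtain f k where x': "x = (f,k)" "f \<in> Hom a d" "k \<in> Hom b d" using x by (auto simp: EE_def)
  have A: "cmp (cmp (cmp s1 s2) f) (iv a (cmp p1 p2)) = cmp (cmp s1 (cmp (cmp s2 f) (iv a p2))) (iv a p1)"
  proof -
    have i: "iv a p1 \<in> Hom a a" "iv a p2 \<in> Hom a a" using ob g' h' by auto
    have "cmp (cmp (cmp s1 s2) f) (iv a (cmp p1 p2)) = cmp (cmp (cmp s1 s2) f) (cmp (iv a p2) (iv a p1))"
      using iv_mult ob g' h' by simp
    also have "\<dots> = cmp (cmp s1 (cmp s2 f)) (cmp (iv a p2) (iv a p1))"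
      using assoc[of a d d d f s2 s1] ob g' h' x' by simp
    also have "\<dots> = cmp s1 (cmp (cmp s2 f) (cmp (iv a p2) (iv a p1)))"
      using comp3[of a d s1 "cmp s2 f" "cmp (iv a p2) (iv a p1)"] ob g' h' x' i by auto
    also have "cmp (cmp s2 f) (cmp (iv a p2) (iv a p1)) = cmp (cmp (cmp s2 f) (iv a p2)) (iv a p1)"
      using assoc[of a a a d "iv a p1" "iv a p2" "cmp s2 f"] ob g' h' x' i by auto
    also have "cmp s1 (cmp (cmp (cmp s2 f) (iv a p2)) (iv a p1)) = cmp (cmp s1 (cmp (cmp s2 f) (iv a p2))) (iv a p1)"
      using comp3[of a d s1 "cmp (cmp s2 f) (iv a p2)" "iv a p1"] ob g' h' x' i by auto
    finally show ?thesis .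
  qed
  have B: "cmp (cmp (cmp s1 s2) k) (iv b (cmp q1 q2)) = cmp (cmp s1 (cmp (cmp s2 k) (iv b q2))) (iv b q1)"
  proof -
    have i: "iv b q1 \<in> Hom b b" "iv b q2 \<in> Hom b b" using ob g' h' by auto
    have "cmp (cmp (cmp s1 s2) k) (iv b (cmp q1 q2)) = cmp (cmp (cmp s1 s2) k) (cmp (iv b q2) (iv b q1))"
      using iv_mult ob g' h' by simp
    also have "\<dots> = cmp (cmp s1 (cmp s2 k)) (cmp (iv b q2) (iv b q1))"
      using assoc[of b d d d k s2 s1] ob g' h' x' by simp
    also have "\<dots> = cmp s1 (cmp (cmp s2 k) (cmp (iv b q2) (iv b q1)))"
      using comp3[of b d s1 "cmp s2 k" "cmp (iv b q2) (iv b q1)"] ob g' h' x' i by auto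
    also have "cmp (cmp s2 k) (cmp (iv b q2) (iv b q1)) = cmp (cmp (cmp s2 k) (iv b q2)) (iv b q1)"
      using assoc[of b b b d "iv b q1" "iv b q2" "cmp s2 k"] ob g' h' x' i by auto
    also have "cmp s1 (cmp (cmp (cmp s2 k) (iv b q2)) (iv b q1)) = cmp (cmp s1 (cmp (cmp s2 k) (iv b q2))) (iv b q1)"
      using comp3[of b d s1 "cmp (cmp s2 k) (iv b q2)" "iv b q1"] ob g' h' x' i by auto
    finally show ?thesis .
  qed
  show ?thesis using A B g' h' x' by (simp add: act_def mult_Big)
qed

lemma act_one:
  assumes ob: "d \<in> Ob" "a \<in> Ob" "b \<in> Ob" and x: "x \<in> EE d a b"
  shows "act d a b \<one>\<^bsub>Big d a b\<^esub> x = x"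
  using assms by (auto simp: act_def one_Big iv_id EE_def)

lemma Big_action: "d \<in> Ob \<Longrightarrow> a \<in> Ob \<Longrightarrow> b \<in> Ob \<Longrightarrow> group_action (Big d a b) (EE d a b) (phi d a b)"
  unfolding phi_def
  by (rule group_action_intro[OF Big_group]) (auto intro: act_closed act_one act_mult)

end

context fic begin

definition stab where "stab d a b x = stabilizer (Big d a b) (phi d a b) x"
definition Fv :: "('m \<Rightarrow> complex) \<Rightarrow> ('m \<Rightarrow> complex) \<Rightarrow> 'm \<times> 'm \<times> 'm \<Rightarrow> complex" where
  "Fv \<phi> \<chi> \<gamma> = \<phi> (fst (snd \<gamma>)) * cnj (\<chi> (snd (snd \<gamma>)))"
definition Nloc where "Nloc d a b \<phi> \<chi> x = (\<Sum>\<gamma>\<in>stab d a b x. Fv \<phi> \<chi> \<gamma>) / of_nat (card (stab d a b x))"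
definition Nv where "Nv d a b \<phi> \<chi> Om = Nloc d a b \<phi> \<chi> (SOME x. x \<in> Om)"
definition Orbs where "Orbs d a b = orbits (Big d a b) (EE d a b) (phi d a b)"

definition Phi :: "'o \<Rightarrow> ('m \<Rightarrow> complex) \<Rightarrow> 'o \<Rightarrow> 'm \<Rightarrow> complex" where
  "Phi c \<phi> d \<sigma> = (1 / of_nat (card (Aut C c))) *
     (\<Sum>f\<in>Hom c d. if (\<exists>\<psi>\<in>Aut C c. cmp \<sigma> f = cmp f \<psi>) then \<phi> (THE \<psi>. \<psi> \<in> Aut C c \<and> cmp \<sigma> f = cmp f \<psi>) else 0)"

definition clf :: "'o \<Rightarrow> ('m \<Rightarrow> complex) \<Rightarrow> bool" where
  "clf c \<phi> \<longleftrightarrow> (\<forall>\<psi>\<in>Hom c c. \<forall>\<tau>\<in>Hom c c. \<phi> (cmp (cmp \<tau> \<psi>) (iv c \<tau>)) = \<phi> \<psi>)"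

lemma fix_iff:
  assumes ob: "a \<in> Ob" "d \<in> Ob" and s: "s \<in> Hom d d" and f: "f \<in> Hom a d" and p: "p \<in> Hom a a"
  shows "cmp (cmp s f) (iv a p) = f \<longleftrightarrow> cmp s f = cmp f p"
proof
  assume A: "cmp (cmp s f) (iv a p) = f"
  have "cmp s f = cmp (cmp s f) (cmp (iv a p) p)" using ob s f p by simp
  also have "\<dots> = cmp (cmp (cmp s f) (iv a p)) p"
    using assoc[of a a a d p "iv a p" "cmp s f"] ob s f p by simp
  finally show "cmp s f = cmp f p" using A by simp
next
  assume A: "cmp s f = cmp f p"
  have "cmp (cmp s f) (iv a p) = cmp f (cmp p (iv a p))"
    using A assoc[of a a a d "iv a p" p f] ob f p by simp
  then show "cmp (cmp s f) (iv a p) = f" using ob f p by simp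
qed

lemma stab_char:
  assumes ob: "d \<in> Ob" "a \<in> Ob" "b \<in> Ob" and x: "x \<in> EE d a b"
  shows "\<gamma> \<in> stab d a b x \<longleftrightarrow> \<gamma> \<in> carrier (Big d a b) \<and>
     cmp (fst \<gamma>) (fst x) = cmp (fst x) (fst (snd \<gamma>)) \<and> cmp (fst \<gamma>) (snd x) = cmp (snd x) (snd (snd \<gamma>))"
proof -
  have "\<gamma> \<in> carrier (Big d a b) \<Longrightarrow> act d a b \<gamma> x = x \<longleftrightarrow>
     cmp (fst \<gamma>) (fst x) = cmp (fst x) (fst (snd \<gamma>)) \<and> cmp (fst \<gamma>) (snd x) = cmp (snd x) (snd (snd \<gamma>))"
    using x ob fix_iff[of a d "fst \<gamma>" "fst x" "fst (snd \<gamma>)"] fix_iff[of b d "fst \<gamma>" "snd x" "snd (snd \<gamma>)"]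
    by (auto simp: act_def carrier_Big EE_def prod_eq_iff)
  then show ?thesis using x by (auto simp: stab_def stabilizer_def phi_def)
qed


lemma the_psi:
  assumes ob: "a \<in> Ob" "d \<in> Ob" and f: "f \<in> Hom a d" and p: "p \<in> Hom a a" and e: "cmp s f = cmp f p"
  shows "(THE \<psi>. \<psi> \<in> Aut C a \<and> cmp s f = cmp f \<psi>) = p"
proof (rule the_equality)
  show "p \<in> Aut C a \<and> cmp s f = cmp f p" using Aut_eq[OF ob(1)] p e by simp
  fix \<psi> assume "\<psi> \<in> Aut C a \<and> cmp s f = cmp f \<psi>"
  then have "\<psi> \<in> Hom a a" "cmp f \<psi> = cmp f p" using Aut_eq[OF ob(1)] e by auto
  then show "\<psi> = p" using mono[of a d a f \<psi> p] ob f p by auto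
qed

definition Aterm :: "'o \<Rightarrow> ('m \<Rightarrow> complex) \<Rightarrow> 'm \<Rightarrow> 'm \<Rightarrow> complex" where
  "Aterm a \<phi> \<sigma> f = (if (\<exists>\<psi>\<in>Aut C a. cmp \<sigma> f = cmp f \<psi>) then \<phi> (THE \<psi>. \<psi> \<in> Aut C a \<and> cmp \<sigma> f = cmp f \<psi>) else 0)"

lemma sum_stab:
  assumes ob: "d \<in> Ob" "a \<in> Ob" "b \<in> Ob" and x: "x \<in> EE d a b"
  shows "(\<Sum>\<sigma>\<in>Hom d d. Aterm a \<phi> \<sigma> (fst x) * cnj (Aterm b \<chi> \<sigma> (snd x))) = (\<Sum>\<gamma>\<in>stab d a b x. Fv \<phi> \<chi> \<gamma>)"
proof -
  obtain f g where xfg: "x = (f,g)" "f \<in> Hom a d" "g \<in> Hom b d" using x by (auto simp: EE_def)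
  define S where "S = {\<sigma>\<in>Hom d d. (\<exists>\<psi>\<in>Aut C a. cmp \<sigma> f = cmp f \<psi>) \<and> (\<exists>\<psi>\<in>Aut C b. cmp \<sigma> g = cmp g \<psi>)}"
  have "(\<Sum>\<sigma>\<in>Hom d d. Aterm a \<phi> \<sigma> (fst x) * cnj (Aterm b \<chi> \<sigma> (snd x))) = (\<Sum>\<sigma>\<in>S. Aterm a \<phi> \<sigma> f * cnj (Aterm b \<chi> \<sigma> g))"
    unfolding xfg(1) fst_conv snd_conv by (rule sum.mono_neutral_right) (auto simp: S_def Aterm_def fin_hom[OF ob(1) ob(1)])
  also have "\<dots> = (\<Sum>\<gamma>\<in>stab d a b x. Fv \<phi> \<chi> \<gamma>)"
  proof (rule sum.reindex_bij_witness[where i = fst and j = "\<lambda>\<sigma>. (\<sigma>, THE \<psi>. \<psi> \<in> Aut C a \<and> cmp \<sigma> f = cmp f \<psi>, THE \<psi>. \<psi> \<in> Aut C b \<and> cmp \<sigma> g = cmp g \<psi>)"])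
    fix \<sigma> assume "\<sigma> \<in> S"
    then obtain p q where sp: "\<sigma> \<in> Hom d d" "p \<in> Hom a a" "cmp \<sigma> f = cmp f p" "q \<in> Hom b b" "cmp \<sigma> g = cmp g q"
      using Aut_eq[OF ob(2)] Aut_eq[OF ob(3)] by (auto simp: S_def)
    have t: "(THE \<psi>. \<psi> \<in> Aut C a \<and> cmp \<sigma> f = cmp f \<psi>) = p" "(THE \<psi>. \<psi> \<in> Aut C b \<and> cmp \<sigma> g = cmp g \<psi>) = q"
      using the_psi[OF ob(2,1) xfg(2) sp(2,3)] the_psi[OF ob(3,1) xfg(3) sp(4,5)] by auto
    show "fst (\<sigma>, THE \<psi>. \<psi> \<in> Aut C a \<and> cmp \<sigma> f = cmp f \<psi>, THE \<psi>. \<psi> \<in> Aut C b \<and> cmp \<sigma> g = cmp g \<psi>) = \<sigma>" by simp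
    show "(\<sigma>, THE \<psi>. \<psi> \<in> Aut C a \<and> cmp \<sigma> f = cmp f \<psi>, THE \<psi>. \<psi> \<in> Aut C b \<and> cmp \<sigma> g = cmp g \<psi>) \<in> stab d a b x"
      unfolding t using stab_char[OF ob x] sp xfg by (simp add: carrier_Big)
    show "Fv \<phi> \<chi> (\<sigma>, THE \<psi>. \<psi> \<in> Aut C a \<and> cmp \<sigma> f = cmp f \<psi>, THE \<psi>. \<psi> \<in> Aut C b \<and> cmp \<sigma> g = cmp g \<psi>) =
        Aterm a \<phi> \<sigma> f * cnj (Aterm b \<chi> \<sigma> g)"
      unfolding Aterm_def Fv_def t using sp Aut_eq[OF ob(2)] Aut_eq[OF ob(3)] by auto
  next
    fix \<gamma> assume "\<gamma> \<in> stab d a b x"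
    then have g: "\<gamma> \<in> carrier (Big d a b)" "cmp (fst \<gamma>) f = cmp f (fst (snd \<gamma>))" "cmp (fst \<gamma>) g = cmp g (snd (snd \<gamma>))"
      using stab_char[OF ob x] xfg by auto
    then have gc: "fst \<gamma> \<in> Hom d d" "fst (snd \<gamma>) \<in> Hom a a" "snd (snd \<gamma>) \<in> Hom b b" by (auto simp: carrier_Big)
    show "fst \<gamma> \<in> S" using g gc Aut_eq[OF ob(2)] Aut_eq[OF ob(3)] by (auto simp: S_def)
    show "(fst \<gamma>, THE \<psi>. \<psi> \<in> Aut C a \<and> cmp (fst \<gamma>) f = cmp f \<psi>, THE \<psi>. \<psi> \<in> Aut C b \<and> cmp (fst \<gamma>) g = cmp g \<psi>) = \<gamma>"
      using the_psi[OF ob(2,1) xfg(2) gc(2) g(2)] the_psi[OF ob(3,1) xfg(3) gc(3) g(3)] by simp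
  qed
  finally show ?thesis .
qed

lemma order_Big: "d \<in> Ob \<Longrightarrow> a \<in> Ob \<Longrightarrow> b \<in> Ob \<Longrightarrow>
   Coset.order (Big d a b) = card (Hom d d) * card (Hom a a) * card (Hom b b)"
  by (simp add: Coset.order_def carrier_Big card_cartesian_product)

lemma inner_formula:
  assumes ob: "d \<in> Ob" "a \<in> Ob" "b \<in> Ob"
  shows "(1 / of_nat (card (Aut C d))) * (\<Sum>\<sigma>\<in>Aut C d. Phi a \<phi> d \<sigma> * cnj (Phi b \<chi> d \<sigma>))
     = (\<Sum>x\<in>EE d a b. \<Sum>\<gamma>\<in>stab d a b x. Fv \<phi> \<chi> \<gamma>) / of_nat (Coset.order (Big d a b))"
proof -
  define na :: complex where "na = of_nat (card (Hom a a))"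
  define nb :: complex where "nb = of_nat (card (Hom b b))"
  define nd :: complex where "nd = of_nat (card (Hom d d))"
  have P: "Phi a \<phi> d \<sigma> * cnj (Phi b \<chi> d \<sigma>) = (\<Sum>x\<in>EE d a b. Aterm a \<phi> \<sigma> (fst x) * cnj (Aterm b \<chi> \<sigma> (snd x))) / (na * nb)" for \<sigma>
  proof -
    have "Phi a \<phi> d \<sigma> = (\<Sum>f\<in>Hom a d. Aterm a \<phi> \<sigma> f) / na"
      using Aut_eq[OF ob(2)] by (simp add: Phi_def Aterm_def na_def)
    moreover have "cnj (Phi b \<chi> d \<sigma>) = (\<Sum>g\<in>Hom b d. cnj (Aterm b \<chi> \<sigma> g)) / nb"
      using Aut_eq[OF ob(3)] by (simp add: Phi_def Aterm_def nb_def)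
    ultimately have "Phi a \<phi> d \<sigma> * cnj (Phi b \<chi> d \<sigma>) = (\<Sum>f\<in>Hom a d. \<Sum>g\<in>Hom b d. Aterm a \<phi> \<sigma> f * cnj (Aterm b \<chi> \<sigma> g)) / (na * nb)"
      by (simp add: sum_product)
    also have "\<dots> = (\<Sum>x\<in>EE d a b. Aterm a \<phi> \<sigma> (fst x) * cnj (Aterm b \<chi> \<sigma> (snd x))) / (na * nb)"
      by (simp add: EE_def sum.cartesian_product case_prod_beta)
    finally show ?thesis .
  qed
  have "(1 / of_nat (card (Aut C d))) * (\<Sum>\<sigma>\<in>Aut C d. Phi a \<phi> d \<sigma> * cnj (Phi b \<chi> d \<sigma>))
      = (\<Sum>\<sigma>\<in>Hom d d. \<Sum>x\<in>EE d a b. Aterm a \<phi> \<sigma> (fst x) * cnj (Aterm b \<chi> \<sigma> (snd x))) / (nd * na * nb)"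
    using Aut_eq[OF ob(1)] by (simp add: P nd_def sum_divide_distrib[symmetric] mult_ac)
  also have "\<dots> = (\<Sum>x\<in>EE d a b. \<Sum>\<sigma>\<in>Hom d d. Aterm a \<phi> \<sigma> (fst x) * cnj (Aterm b \<chi> \<sigma> (snd x))) / (nd * na * nb)"
    by (subst sum.swap) simp
  also have "\<dots> = (\<Sum>x\<in>EE d a b. \<Sum>\<gamma>\<in>stab d a b x. Fv \<phi> \<chi> \<gamma>) / (nd * na * nb)"
    using sum_stab[OF ob] by simp
  also have "nd * na * nb = of_nat (Coset.order (Big d a b))"
    using order_Big[OF ob] by (simp add: nd_def na_def nb_def)
  finally show ?thesis .
qed

end

context fic begin

lemma inv_Big:
  assumes ob: "d \<in> Ob" "a \<in> Ob" "b \<in> Ob" and g: "\<gamma> \<in> carrier (Big d a b)"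
  shows "inv\<^bsub>Big d a b\<^esub> \<gamma> = (iv d (fst \<gamma>), iv a (fst (snd \<gamma>)), iv b (snd (snd \<gamma>)))"
proof -
  obtain s p q where "\<gamma> = (s,p,q)" "s \<in> carrier (AG d)" "p \<in> carrier (AG a)" "q \<in> carrier (AG b)"
    using g by (auto simp: carrier_Big AG_def)
  then show ?thesis
    using inv_DirProd[OF AG_group[OF ob(1)] DirProd_group[OF AG_group[OF ob(2)] AG_group[OF ob(3)]]]
      inv_DirProd[OF AG_group[OF ob(2)] AG_group[OF ob(3)]]
    by (simp add: Big_def iv_def)
qed

lemma Fv_conj:
  assumes ob: "d \<in> Ob" "a \<in> Ob" "b \<in> Ob" and g: "\<gamma> \<in> carrier (Big d a b)" and h: "\<eta> \<in> carrier (Big d a b)"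
    and ca: "clf a \<phi>" and cb: "clf b \<chi>"
  shows "Fv \<phi> \<chi> (\<gamma> \<otimes>\<^bsub>Big d a b\<^esub> \<eta> \<otimes>\<^bsub>Big d a b\<^esub> inv\<^bsub>Big d a b\<^esub> \<gamma>) = Fv \<phi> \<chi> \<eta>"
proof -
  have c: "fst (snd \<gamma>) \<in> Hom a a" "snd (snd \<gamma>) \<in> Hom b b" "fst (snd \<eta>) \<in> Hom a a" "snd (snd \<eta>) \<in> Hom b b"
    using g h by (auto simp: carrier_Big)
  show ?thesis
    using inv_Big[OF ob g] ca cb c by (simp add: mult_Big Fv_def clf_def)
qed

lemma Nloc_inv:
  assumes ob: "d \<in> Ob" "a \<in> Ob" "b \<in> Ob" and x: "x \<in> EE d a b" and g: "\<gamma> \<in> carrier (Big d a b)"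
    and ca: "clf a \<phi>" and cb: "clf b \<chi>"
  shows "Nloc d a b \<phi> \<chi> (phi d a b \<gamma> x) = Nloc d a b \<phi> \<chi> x"
proof -
  interpret GA: group_action "Big d a b" "EE d a b" "phi d a b" using Big_action[OF ob] .
  interpret G: Group.group "Big d a b" using Big_group[OF ob] .
  let ?B = "Big d a b"
  let ?y = "phi d a b \<gamma> x"
  have y: "?y \<in> EE d a b" using GA.element_image[OF g x] by simp
  have ig: "inv\<^bsub>?B\<^esub> \<gamma> \<in> carrier ?B" using g by simp
  have one: "phi d a b \<one>\<^bsub>?B\<^esub> z = z" if "z \<in> EE d a b" for z
    using GA.id_eq_one that by (metis restrict_apply')
  have bk: "phi d a b (inv\<^bsub>?B\<^esub> \<gamma>) ?y = x"
    using GA.composition_rule[OF x ig g] one[OF x] g by simp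
  have st: "\<eta> \<in> stab d a b z \<longleftrightarrow> \<eta> \<in> carrier ?B \<and> phi d a b \<eta> z = z" for \<eta> z
    by (simp add: stab_def stabilizer_def)
  have m1: "\<gamma> \<otimes>\<^bsub>?B\<^esub> \<eta> \<otimes>\<^bsub>?B\<^esub> inv\<^bsub>?B\<^esub> \<gamma> \<in> stab d a b ?y" if "\<eta> \<in> stab d a b x" for \<eta>
  proof -
    have e: "\<eta> \<in> carrier ?B" "phi d a b \<eta> x = x" using that st by auto
    have "phi d a b (\<gamma> \<otimes>\<^bsub>?B\<^esub> \<eta> \<otimes>\<^bsub>?B\<^esub> inv\<^bsub>?B\<^esub> \<gamma>) ?y = phi d a b (\<gamma> \<otimes>\<^bsub>?B\<^esub> \<eta>) (phi d a b (inv\<^bsub>?B\<^esub> \<gamma>) ?y)"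
      using GA.composition_rule[OF y _ ig] e g by simp
    also have "\<dots> = ?y" using bk GA.composition_rule[OF x g e(1)] e by simp
    finally show ?thesis using st e g ig by simp
  qed
  have m2: "inv\<^bsub>?B\<^esub> \<gamma> \<otimes>\<^bsub>?B\<^esub> \<eta> \<otimes>\<^bsub>?B\<^esub> \<gamma> \<in> stab d a b x" if "\<eta> \<in> stab d a b ?y" for \<eta>
  proof -
    have e: "\<eta> \<in> carrier ?B" "phi d a b \<eta> ?y = ?y" using that st by auto
    have "phi d a b (inv\<^bsub>?B\<^esub> \<gamma> \<otimes>\<^bsub>?B\<^esub> \<eta> \<otimes>\<^bsub>?B\<^esub> \<gamma>) x = phi d a b (inv\<^bsub>?B\<^esub> \<gamma> \<otimes>\<^bsub>?B\<^esub> \<eta>) ?y"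
      using GA.composition_rule[OF x _ g] e ig by simp
    also have "\<dots> = x" using bk GA.composition_rule[OF y ig e(1)] e by simp
    finally show ?thesis using st e g ig by simp
  qed
  have r1: "inv\<^bsub>?B\<^esub> \<gamma> \<otimes>\<^bsub>?B\<^esub> (\<gamma> \<otimes>\<^bsub>?B\<^esub> \<eta> \<otimes>\<^bsub>?B\<^esub> inv\<^bsub>?B\<^esub> \<gamma>) \<otimes>\<^bsub>?B\<^esub> \<gamma> = \<eta>" if "\<eta> \<in> carrier ?B" for \<eta>
    using that g ig by (simp add: G.m_assoc[symmetric]) (simp add: G.m_assoc)
  have r2: "\<gamma> \<otimes>\<^bsub>?B\<^esub> (inv\<^bsub>?B\<^esub> \<gamma> \<otimes>\<^bsub>?B\<^esub> \<eta> \<otimes>\<^bsub>?B\<^esub> \<gamma>) \<otimes>\<^bsub>?B\<^esub> inv\<^bsub>?B\<^esub> \<gamma> = \<eta>" if "\<eta> \<in> carrier ?B" for \<eta>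
    using that g ig by (simp add: G.m_assoc[symmetric]) (simp add: G.m_assoc)
  have sc: "stab d a b z \<subseteq> carrier ?B" for z unfolding stab_def stabilizer_def by auto
  have S1: "(\<Sum>\<eta>\<in>stab d a b ?y. h \<eta>) = (\<Sum>\<eta>\<in>stab d a b x. h (\<gamma> \<otimes>\<^bsub>?B\<^esub> \<eta> \<otimes>\<^bsub>?B\<^esub> inv\<^bsub>?B\<^esub> \<gamma>))" for h :: "_ \<Rightarrow> 'c::comm_monoid_add"
    apply (rule sym, rule sum.reindex_bij_witness[where j = "\<lambda>\<eta>. \<gamma> \<otimes>\<^bsub>?B\<^esub> \<eta> \<otimes>\<^bsub>?B\<^esub> inv\<^bsub>?B\<^esub> \<gamma>" and i = "\<lambda>\<eta>. inv\<^bsub>?B\<^esub> \<gamma> \<otimes>\<^bsub>?B\<^esub> \<eta> \<otimes>\<^bsub>?B\<^esub> \<gamma>"])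
    apply (rule r1, use sc in blast)
    apply (erule m1)
    apply (rule r2, use sc in blast)
    apply (erule m2)
    apply (rule refl)
    done
  have "(\<Sum>\<eta>\<in>stab d a b ?y. Fv \<phi> \<chi> \<eta>) = (\<Sum>\<eta>\<in>stab d a b x. Fv \<phi> \<chi> \<eta>)"
  proof -
    have "(\<Sum>\<eta>\<in>stab d a b x. Fv \<phi> \<chi> (\<gamma> \<otimes>\<^bsub>?B\<^esub> \<eta> \<otimes>\<^bsub>?B\<^esub> inv\<^bsub>?B\<^esub> \<gamma>)) = (\<Sum>\<eta>\<in>stab d a b x. Fv \<phi> \<chi> \<eta>)"
      by (rule sum.cong[OF refl], rule Fv_conj[OF ob g _ ca cb], use sc in blast)
    then show ?thesis using S1[of "Fv \<phi> \<chi>"] by simp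
  qed
  moreover have "card (stab d a b ?y) = card (stab d a b x)"
    using S1[of "\<lambda>_. 1::nat"] by simp
  ultimately show ?thesis by (simp add: Nloc_def)
qed


lemma finite_EE: "d \<in> Ob \<Longrightarrow> a \<in> Ob \<Longrightarrow> b \<in> Ob \<Longrightarrow> finite (EE d a b)"
  by (simp add: EE_def fin_hom)

lemma finite_Big: "d \<in> Ob \<Longrightarrow> a \<in> Ob \<Longrightarrow> b \<in> Ob \<Longrightarrow> finite (carrier (Big d a b))"
  by (simp add: carrier_Big fin_hom)

lemma Nloc_orbit:
  assumes ob: "d \<in> Ob" "a \<in> Ob" "b \<in> Ob" and ca: "clf a \<phi>" and cb: "clf b \<chi>"
    and Om: "Om \<in> Orbs d a b" and x: "x \<in> Om"
  shows "Nloc d a b \<phi> \<chi> x = Nv d a b \<phi> \<chi> Om"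
proof -
  interpret GA: group_action "Big d a b" "EE d a b" "phi d a b" using Big_action[OF ob] .
  obtain x0 where x0: "x0 \<in> EE d a b" "Om = orbit (Big d a b) (phi d a b) x0"
    using Om by (auto simp: Orbs_def orbits_def)
  have key: "Nloc d a b \<phi> \<chi> z = Nloc d a b \<phi> \<chi> x0" if zO: "z \<in> Om" for z
  proof -
    obtain g where "g \<in> carrier (Big d a b)" "z = phi d a b g x0" using zO x0(2) unfolding orbit_def by blast
    then show ?thesis using Nloc_inv[OF ob x0(1) _ ca cb] by simp
  qed
  have "x0 \<in> Om" using GA.orbit_refl[OF x0(1)] x0 by simp
  then have "(SOME z. z \<in> Om) \<in> Om" by (rule someI)
  then show ?thesis using key[OF x] key by (simp add: Nv_def)
qed

lemma orbit_sum:
  assumes ob: "d \<in> Ob" "a \<in> Ob" "b \<in> Ob" and ca: "clf a \<phi>" and cb: "clf b \<chi>"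
  shows "(\<Sum>x\<in>EE d a b. \<Sum>\<gamma>\<in>stab d a b x. Fv \<phi> \<chi> \<gamma>) / of_nat (Coset.order (Big d a b))
       = (\<Sum>Om\<in>Orbs d a b. Nv d a b \<phi> \<chi> Om)"
proof -
  interpret GA: group_action "Big d a b" "EE d a b" "phi d a b" using Big_action[OF ob] .
  interpret G: Group.group "Big d a b" using Big_group[OF ob] .
  have finB: "finite (carrier (Big d a b))" using finite_Big[OF ob] .
  have ordpos: "Coset.order (Big d a b) > 0" using finB by (simp add: G.order_gt_0_iff_finite)
  have cs: "(\<Sum>\<gamma>\<in>stab d a b x. Fv \<phi> \<chi> \<gamma>) = of_nat (card (stab d a b x)) * Nloc d a b \<phi> \<chi> x"
    if x: "x \<in> EE d a b" for x
  proof -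
    have "\<one>\<^bsub>Big d a b\<^esub> \<in> stab d a b x"
      using GA.id_eq_one x by (simp add: stab_def stabilizer_def) (metis restrict_apply')
    moreover have "finite (stab d a b x)" using finB finite_subset[of "stab d a b x"] by (auto simp: stab_def stabilizer_def)
    ultimately have "card (stab d a b x) > 0" by (auto simp: card_gt_0_iff)
    then show ?thesis by (simp add: Nloc_def)
  qed
  have "(\<Sum>x\<in>EE d a b. \<Sum>\<gamma>\<in>stab d a b x. Fv \<phi> \<chi> \<gamma>) = (\<Sum>x\<in>EE d a b. of_nat (card (stab d a b x)) * Nloc d a b \<phi> \<chi> x)"
    using cs by simp
  also have "\<dots> = (\<Sum>Om\<in>Orbs d a b. \<Sum>x\<in>Om. of_nat (card (stab d a b x)) * Nloc d a b \<phi> \<chi> x)"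
    unfolding Orbs_def by (rule GA.disjoint_sum[OF finite_EE[OF ob], symmetric])
  also have "\<dots> = (\<Sum>Om\<in>Orbs d a b. of_nat (Coset.order (Big d a b)) * Nv d a b \<phi> \<chi> Om)"
  proof (rule sum.cong[OF refl])
    fix Om assume Om: "Om \<in> Orbs d a b"
    have "(\<Sum>x\<in>Om. of_nat (card (stab d a b x)) * Nloc d a b \<phi> \<chi> x) = (\<Sum>x\<in>Om. of_nat (card (stab d a b x))) * Nv d a b \<phi> \<chi> Om"
      using Nloc_orbit[OF ob ca cb Om] by (simp add: sum_distrib_right)
    also have "(\<Sum>x\<in>Om. of_nat (card (stab d a b x)) :: complex) = of_nat (\<Sum>x\<in>Om. card (stab d a b x))" by simp
    also have "(\<Sum>x\<in>Om. card (stab d a b x)) = Coset.order (Big d a b)"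
      using GA.card_stablizer_sum[OF finB] Om by (simp add: Orbs_def stab_def)
    finally show "(\<Sum>x\<in>Om. of_nat (card (stab d a b x)) * Nloc d a b \<phi> \<chi> x) = of_nat (Coset.order (Big d a b)) * Nv d a b \<phi> \<chi> Om" .
  qed
  finally show ?thesis using ordpos by (simp add: sum_distrib_left[symmetric])
qed

end

context fic begin

definition prel where
  "prel a b d d' x y \<longleftrightarrow> (\<exists>p\<in>Ob. \<exists>f1 f2. is_pullback_square C p a b d f1 f2 (fst x) (snd x) \<and>
      is_pullback_square C p a b d' f1 f2 (fst y) (snd y))"

lemma prel_sym: "prel a b d d' x y \<Longrightarrow> prel a b d' d y x"
  unfolding prel_def by blast

lemma prel_aut:
  assumes ob: "a \<in> Ob" "b \<in> Ob" "d \<in> Ob" "d' \<in> Ob" and R: "prel a b d d' x y"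
    and p: "p \<in> Hom a a" and q: "q \<in> Hom b b"
  shows "prel a b d d' (cmp (fst x) p, cmp (snd x) q) (cmp (fst y) p, cmp (snd y) q)"
proof -
  obtain r f1 f2 where r: "r \<in> Ob" and P1: "is_pullback_square C r a b d f1 f2 (fst x) (snd x)"
    and P2: "is_pullback_square C r a b d' f1 f2 (fst y) (snd y)" using R by (auto simp: prel_def)
  show ?thesis unfolding prel_def
    using pb_aut[OF r ob(1,2,3) P1 p q] pb_aut[OF r ob(1,2,4) P2 p q] r by auto
qed

lemma prel_core:
  assumes ob: "a \<in> Ob" "b \<in> Ob" "d \<in> Ob" "d' \<in> Ob"
    and R1: "prel a b d d' x y" and R2: "prel a b d d' (cmp s (fst x), cmp s (snd x)) y'"
    and s: "s \<in> Hom d d"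
  shows "\<exists>s'\<in>Hom d' d'. cmp s' (fst y) = fst y' \<and> cmp s' (snd y) = snd y'"
proof -
  obtain r f1 f2 where r: "r \<in> Ob" and P1: "is_pullback_square C r a b d f1 f2 (fst x) (snd x)"
    and P2: "is_pullback_square C r a b d' f1 f2 (fst y) (snd y)" using R1 by (auto simp: prel_def)
  obtain r' k1 k2 where r': "r' \<in> Ob" and P3: "is_pullback_square C r' a b d k1 k2 (cmp s (fst x)) (cmp s (snd x))"
    and P4: "is_pullback_square C r' a b d' k1 k2 (fst y') (snd y')" using R2 by (auto simp: prel_def)
  show ?thesis using pb_core[OF r r' ob P1 P2 P3 P4 s] .
qed

lemma orbit_rel:
  assumes ob: "a \<in> Ob" "b \<in> Ob" "d \<in> Ob" "d' \<in> Ob"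
    and x: "x \<in> EE d a b" and y: "y \<in> EE d' a b" and y': "y' \<in> EE d' a b"
    and R1: "prel a b d d' x y" and R2: "prel a b d d' x' y'"
    and o: "x' \<in> orbit (Big d a b) (phi d a b) x"
  shows "y' \<in> orbit (Big d' a b) (phi d' a b) y"
proof -
  obtain \<gamma> where g: "\<gamma> \<in> carrier (Big d a b)" "x' = phi d a b \<gamma> x" using o unfolding orbit_def by blast
  obtain s p q where spq: "\<gamma> = (s,p,q)" "s \<in> Hom d d" "p \<in> Hom a a" "q \<in> Hom b b" using g by (auto simp: carrier_Big)
  obtain f g where fg: "x = (f,g)" "f \<in> Hom a d" "g \<in> Hom b d" using x by (auto simp: EE_def)
  obtain fy gy where fgy: "y = (fy,gy)" "fy \<in> Hom a d'" "gy \<in> Hom b d'" using y by (auto simp: EE_def)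
  have ip: "iv a p \<in> Hom a a" "iv b q \<in> Hom b b" using spq ob by auto
  have R3: "prel a b d d' (cmp f (iv a p), cmp g (iv b q)) (cmp fy (iv a p), cmp gy (iv b q))"
    using prel_aut[OF ob R1 ip] fg fgy by simp
  have x': "x' = (cmp s (cmp f (iv a p)), cmp s (cmp g (iv b q)))"
    using g spq fg x ob comp3[of a d s f "iv a p"] comp3[of b d s g "iv b q"] ip
    by (simp add: phi_def act_def)
  obtain s' where s': "s' \<in> Hom d' d'" "cmp s' (cmp fy (iv a p)) = fst y'" "cmp s' (cmp gy (iv b q)) = snd y'"
    using prel_core[OF ob R3, of s y'] R2 x' spq by auto
  have "phi d' a b (s', p, q) y = y'"
    using s' fgy y ob comp3[of a d' s' fy "iv a p"] comp3[of b d' s' gy "iv b q"] ip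
    by (simp add: phi_def act_def prod_eq_iff)
  moreover have "(s', p, q) \<in> carrier (Big d' a b)" using s' spq by (simp add: carrier_Big)
  ultimately show ?thesis unfolding orbit_def by blast
qed


lemma avg_image:
  assumes fin: "finite A" and fib: "\<And>y. y \<in> h ` A \<Longrightarrow> card {x\<in>A. h x = y} = k"
  shows "(\<Sum>x\<in>A. F (h x)) / of_nat (card A) = (\<Sum>y\<in>h ` A. F y) / (of_nat (card (h ` A)) :: complex)"
proof (cases "A = {}")
  case True then show ?thesis by simp
next
  case False
  have s1: "(\<Sum>x\<in>A. F (h x)) = (\<Sum>y\<in>h ` A. \<Sum>x\<in>{x\<in>A. h x = y}. F (h x))"
    by (rule sum.image_gen[OF fin])
  also have "\<dots> = (\<Sum>y\<in>h ` A. of_nat k * F y)"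
    by (rule sum.cong[OF refl]) (simp add: fib)
  finally have S: "(\<Sum>x\<in>A. F (h x)) = of_nat k * (\<Sum>y\<in>h ` A. F y)" by (simp add: sum_distrib_left)
  have "card A = (\<Sum>y\<in>h ` A. card {x\<in>A. h x = y})"
    using sum.image_gen[OF fin, of "\<lambda>_. 1::nat" h] by simp
  also have "\<dots> = k * card (h ` A)" using fib by simp
  finally have cA: "card A = k * card (h ` A)" .
  have "card A > 0" using False fin by (simp add: card_gt_0_iff)
  then have "k > 0" "card (h ` A) > 0" using cA by auto
  then show ?thesis using S cA by (simp add: field_simps)
qed

lemma stab_fiber:
  assumes ob: "d \<in> Ob" "a \<in> Ob" "b \<in> Ob" and x: "x \<in> EE d a b" and g0: "\<gamma>0 \<in> stab d a b x"
  shows "card {\<gamma>\<in>stab d a b x. snd \<gamma> = snd \<gamma>0} = card {\<gamma>\<in>stab d a b x. snd \<gamma> = (idm a, idm b)}"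
proof -
  interpret GA: group_action "Big d a b" "EE d a b" "phi d a b" using Big_action[OF ob] .
  interpret G: Group.group "Big d a b" using Big_group[OF ob] .
  let ?B = "Big d a b"
  have sg: "subgroup (stab d a b x) ?B" unfolding stab_def by (rule GA.stabilizer_subgroup[OF x])
  have sc: "stab d a b x \<subseteq> carrier ?B" using subgroup.subset[OF sg] .
  have g0c: "\<gamma>0 \<in> carrier ?B" using g0 sc by auto
  have ig0: "inv\<^bsub>?B\<^esub> \<gamma>0 \<in> stab d a b x" using subgroup.m_inv_closed[OF sg g0] .
  have comps: "fst (snd \<gamma>0) \<in> Hom a a" "snd (snd \<gamma>0) \<in> Hom b b" using g0c by (auto simp: carrier_Big)
  have ids: "cmp (fst (snd \<gamma>0)) (idm a) = fst (snd \<gamma>0)" "cmp (snd (snd \<gamma>0)) (idm b) = snd (snd \<gamma>0)"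
    using comps ob by auto
  show ?thesis
  proof (rule bij_betw_same_card[symmetric], rule bij_betw_byWitness[where f = "\<lambda>\<eta>. \<gamma>0 \<otimes>\<^bsub>?B\<^esub> \<eta>" and f' = "\<lambda>\<eta>. inv\<^bsub>?B\<^esub> \<gamma>0 \<otimes>\<^bsub>?B\<^esub> \<eta>"])
    show "\<forall>a\<in>{\<gamma> \<in> stab d a b x. snd \<gamma> = (idm a, idm b)}. inv\<^bsub>?B\<^esub> \<gamma>0 \<otimes>\<^bsub>?B\<^esub> (\<gamma>0 \<otimes>\<^bsub>?B\<^esub> a) = a"
      using sc g0c by (auto simp: G.m_assoc[symmetric])
    show "\<forall>a'\<in>{\<gamma> \<in> stab d a b x. snd \<gamma> = snd \<gamma>0}. \<gamma>0 \<otimes>\<^bsub>?B\<^esub> (inv\<^bsub>?B\<^esub> \<gamma>0 \<otimes>\<^bsub>?B\<^esub> a') = a'"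
      using sc g0c by (auto simp: G.m_assoc[symmetric])
    show "(\<otimes>\<^bsub>?B\<^esub>) \<gamma>0 ` {\<gamma> \<in> stab d a b x. snd \<gamma> = (idm a, idm b)} \<subseteq> {\<gamma> \<in> stab d a b x. snd \<gamma> = snd \<gamma>0}"
    proof
      fix z assume z: "z \<in> (\<otimes>\<^bsub>?B\<^esub>) \<gamma>0 ` {\<gamma> \<in> stab d a b x. snd \<gamma> = (idm a, idm b)}"
      then obtain \<eta> where e: "\<eta> \<in> stab d a b x" "snd \<eta> = (idm a, idm b)" "z = \<gamma>0 \<otimes>\<^bsub>?B\<^esub> \<eta>" by auto
      have "z \<in> stab d a b x" using subgroup.m_closed[OF sg g0 e(1)] e by simp
      moreover have "snd z = snd \<gamma>0" using e ids by (cases \<gamma>0, cases \<eta>) (auto simp: mult_Big)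
      ultimately show "z \<in> {\<gamma> \<in> stab d a b x. snd \<gamma> = snd \<gamma>0}" by simp
    qed
    show "(\<lambda>\<eta>. inv\<^bsub>?B\<^esub> \<gamma>0 \<otimes>\<^bsub>?B\<^esub> \<eta>) ` {\<gamma> \<in> stab d a b x. snd \<gamma> = snd \<gamma>0} \<subseteq> {\<gamma> \<in> stab d a b x. snd \<gamma> = (idm a, idm b)}"
    proof
      fix z assume z: "z \<in> (\<lambda>\<eta>. inv\<^bsub>?B\<^esub> \<gamma>0 \<otimes>\<^bsub>?B\<^esub> \<eta>) ` {\<gamma> \<in> stab d a b x. snd \<gamma> = snd \<gamma>0}"
      then obtain \<eta> where e: "\<eta> \<in> stab d a b x" "snd \<eta> = snd \<gamma>0" "z = inv\<^bsub>?B\<^esub> \<gamma>0 \<otimes>\<^bsub>?B\<^esub> \<eta>" by auto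
      have "z \<in> stab d a b x" using subgroup.m_closed[OF sg ig0 e(1)] e by simp
      moreover have "snd z = (idm a, idm b)" using e comps ob inv_Big[OF ob g0c]
        by (cases \<gamma>0, cases \<eta>) (auto simp: mult_Big)
      ultimately show "z \<in> {\<gamma> \<in> stab d a b x. snd \<gamma> = (idm a, idm b)}" by simp
    qed
  qed
qed

lemma Nloc_snd:
  assumes ob: "d \<in> Ob" "a \<in> Ob" "b \<in> Ob" and x: "x \<in> EE d a b"
  shows "Nloc d a b \<phi> \<chi> x = (\<Sum>pq\<in>snd ` stab d a b x. \<phi> (fst pq) * cnj (\<chi> (snd pq))) / of_nat (card (snd ` stab d a b x))"
proof -
  have fin: "finite (stab d a b x)"
    using finite_Big[OF ob] by (rule finite_subset[rotated]) (auto simp: stab_def stabilizer_def)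
  have "Nloc d a b \<phi> \<chi> x = (\<Sum>\<gamma>\<in>stab d a b x. (\<lambda>pq. \<phi> (fst pq) * cnj (\<chi> (snd pq))) (snd \<gamma>)) / of_nat (card (stab d a b x))"
    by (simp add: Nloc_def Fv_def)
  also have "\<dots> = (\<Sum>pq\<in>snd ` stab d a b x. \<phi> (fst pq) * cnj (\<chi> (snd pq))) / of_nat (card (snd ` stab d a b x))"
  proof (rule avg_image[OF fin])
    fix y assume "y \<in> snd ` stab d a b x"
    then obtain \<gamma>0 where "\<gamma>0 \<in> stab d a b x" "y = snd \<gamma>0" by auto
    then show "card {\<gamma> \<in> stab d a b x. snd \<gamma> = y} = card {\<gamma>\<in>stab d a b x. snd \<gamma> = (idm a, idm b)}"
      using stab_fiber[OF ob x] by simp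
  qed
  finally show ?thesis .
qed

lemma snd_stab_sub:
  assumes ob: "a \<in> Ob" "b \<in> Ob" "d \<in> Ob" "d' \<in> Ob"
    and x: "x \<in> EE d a b" and y: "y \<in> EE d' a b" and R: "prel a b d d' x y"
  shows "snd ` stab d a b x \<subseteq> snd ` stab d' a b y"
proof
  fix pq assume "pq \<in> snd ` stab d a b x"
  then obtain \<gamma> where g: "\<gamma> \<in> stab d a b x" "pq = snd \<gamma>" by auto
  then obtain s p q where spq: "\<gamma> = (s,p,q)" "s \<in> Hom d d" "p \<in> Hom a a" "q \<in> Hom b b"
    "cmp s (fst x) = cmp (fst x) p" "cmp s (snd x) = cmp (snd x) q"
    using stab_char[OF ob(3,1,2) x] by (auto simp: carrier_Big)
  have R3: "prel a b d d' (cmp s (fst x), cmp s (snd x)) (cmp (fst y) p, cmp (snd y) q)"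
    using prel_aut[OF ob R spq(3,4)] spq(5,6) by simp
  obtain s' where s': "s' \<in> Hom d' d'" "cmp s' (fst y) = cmp (fst y) p" "cmp s' (snd y) = cmp (snd y) q"
    using prel_core[OF ob R R3 spq(2)] by auto
  have "(s',p,q) \<in> stab d' a b y" using stab_char[OF ob(4,1,2) y] s' spq by (simp add: carrier_Big)
  then show "pq \<in> snd ` stab d' a b y" using g spq by force
qed

lemma Nloc_rel:
  assumes ob: "a \<in> Ob" "b \<in> Ob" "d \<in> Ob" "d' \<in> Ob"
    and x: "x \<in> EE d a b" and y: "y \<in> EE d' a b" and R: "prel a b d d' x y"
  shows "Nloc d a b \<phi> \<chi> x = Nloc d' a b \<phi> \<chi> y"
proof -
  have "snd ` stab d a b x = snd ` stab d' a b y"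
    using snd_stab_sub[OF ob x y R] snd_stab_sub[OF ob(1,2,4,3) y x prel_sym[OF R]] by blast
  then show ?thesis using Nloc_snd[OF ob(3,1,2) x] Nloc_snd[OF ob(4,1,2) y] by simp
qed

end

lemma orbit_cmp_gen:
  fixes NA :: "'x set \<Rightarrow> complex" and NB :: "'y set \<Rightarrow> complex"
  assumes exA: "\<forall>A\<in>OA. \<exists>x\<in>A. \<exists>B\<in>OB. \<exists>y\<in>B. R x y"
    and cong: "\<And>A A' B B' x x' y y'. A \<in> OA \<Longrightarrow> A' \<in> OA \<Longrightarrow> B \<in> OB \<Longrightarrow> B' \<in> OB \<Longrightarrow> x \<in> A \<Longrightarrow> x' \<in> A' \<Longrightarrow>
       y \<in> B \<Longrightarrow> y' \<in> B' \<Longrightarrow> R x y \<Longrightarrow> R x' y' \<Longrightarrow> (A = A' \<longleftrightarrow> B = B')"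
    and val: "\<And>A B x y. A \<in> OA \<Longrightarrow> B \<in> OB \<Longrightarrow> x \<in> A \<Longrightarrow> y \<in> B \<Longrightarrow> R x y \<Longrightarrow> NA A = NB B"
  shows "\<exists>S\<subseteq>OB. sum NA OA = sum NB S \<and> ((\<forall>B\<in>OB. \<exists>y\<in>B. \<exists>A\<in>OA. \<exists>x\<in>A. R x y) \<longrightarrow> S = OB)"
proof -
  define m where "m A = (SOME B. B \<in> OB \<and> (\<exists>x\<in>A. \<exists>y\<in>B. R x y))" for A
  have mA: "m A \<in> OB \<and> (\<exists>x\<in>A. \<exists>y\<in>m A. R x y)" if "A \<in> OA" for A
    unfolding m_def by (rule someI_ex) (use exA that in blast)
  have inj: "inj_on m OA"
  proof (rule inj_onI)
    fix A A' assume A: "A \<in> OA" "A' \<in> OA" "m A = m A'"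
    obtain x y where "x \<in> A" "y \<in> m A" "R x y" using mA[OF A(1)] by blast
    moreover obtain x' y' where "x' \<in> A'" "y' \<in> m A'" "R x' y'" using mA[OF A(2)] by blast
    ultimately show "A = A'" using cong[of A A' "m A" "m A'"] A mA by blast
  qed
  have vals: "NA A = NB (m A)" if "A \<in> OA" for A
    using mA[OF that] val[OF that] by blast
  have "sum NA OA = sum NB (m ` OA)"
    using sum.reindex[OF inj, of NB] vals by simp
  moreover have "m ` OA \<subseteq> OB" using mA by blast
  moreover have "m ` OA = OB" if sur: "\<forall>B\<in>OB. \<exists>y\<in>B. \<exists>A\<in>OA. \<exists>x\<in>A. R x y"
  proof
    show "m ` OA \<subseteq> OB" using mA by blast
    show "OB \<subseteq> m ` OA"
    proof
      fix B assume B: "B \<in> OB"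
      then obtain y A x where yAx: "y \<in> B" "A \<in> OA" "x \<in> A" "R x y" using sur by blast
      obtain x' y' where "x' \<in> A" "y' \<in> m A" "R x' y'" using mA[OF yAx(2)] by blast
      then have "m A = B" using cong[of A A B "m A" x x' y y'] yAx B mA[OF yAx(2)] by blast
      then show "B \<in> m ` OA" using yAx by blast
    qed
  qed
  ultimately show ?thesis by blast
qed

context fic begin

lemma orbit_of_member:
  assumes ob: "d \<in> Ob" "a \<in> Ob" "b \<in> Ob" and Om: "Om \<in> Orbs d a b" and x: "x \<in> Om"
  shows "Om = orbit (Big d a b) (phi d a b) x" and "x \<in> EE d a b"
proof -
  interpret GA: group_action "Big d a b" "EE d a b" "phi d a b" using Big_action[OF ob] .
  obtain x0 where x0: "x0 \<in> EE d a b" "Om = orbit (Big d a b) (phi d a b) x0"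
    using Om by (auto simp: Orbs_def orbits_def)
  obtain g where g: "g \<in> carrier (Big d a b)" "x = phi d a b g x0" using x x0 unfolding orbit_def by blast
  show xE: "x \<in> EE d a b" using GA.element_image[OF g(1) x0(1)] g by simp
  have "orbit (Big d a b) (phi d a b) x \<in> orbits (Big d a b) (EE d a b) (phi d a b)"
    using xE unfolding orbits_def by blast
  moreover have "x \<in> orbit (Big d a b) (phi d a b) x" using GA.orbit_refl[OF xE] .
  ultimately show "Om = orbit (Big d a b) (phi d a b) x"
    using GA.disjoint_union[of Om "orbit (Big d a b) (phi d a b) x"] Om x by (auto simp: Orbs_def)
qed

lemma orbit_nonempty:
  assumes ob: "d \<in> Ob" "a \<in> Ob" "b \<in> Ob" and Om: "Om \<in> Orbs d a b"
  shows "\<exists>x. x \<in> Om"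
proof -
  interpret GA: group_action "Big d a b" "EE d a b" "phi d a b" using Big_action[OF ob] .
  obtain x0 where x0: "x0 \<in> EE d a b" "Om = orbit (Big d a b) (phi d a b) x0"
    using Om by (auto simp: Orbs_def orbits_def)
  then show ?thesis using GA.orbit_refl[OF x0(1)] by blast
qed

lemma orbs_compare:
  assumes ob: "a \<in> Ob" "b \<in> Ob" "d \<in> Ob" "d' \<in> Ob" and ca: "clf a \<phi>" and cb: "clf b \<chi>"
    and ex: "\<forall>x\<in>EE d a b. \<exists>y\<in>EE d' a b. prel a b d d' x y"
  shows "\<exists>S\<subseteq>Orbs d' a b. (\<Sum>Om\<in>Orbs d a b. Nv d a b \<phi> \<chi> Om) = (\<Sum>Om\<in>S. Nv d' a b \<phi> \<chi> Om) \<and>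
     ((\<forall>y\<in>EE d' a b. \<exists>x\<in>EE d a b. prel a b d d' x y) \<longrightarrow> S = Orbs d' a b)"
proof -
  interpret GA: group_action "Big d a b" "EE d a b" "phi d a b" using Big_action[OF ob(3,1,2)] .
  interpret GB: group_action "Big d' a b" "EE d' a b" "phi d' a b" using Big_action[OF ob(4,1,2)] .
  have memB: "\<exists>B\<in>Orbs d' a b. y \<in> B" if "y \<in> EE d' a b" for y
    using GB.orbit_refl[OF that] that unfolding Orbs_def orbits_def by blast
  have memA: "\<exists>A\<in>Orbs d a b. x \<in> A" if "x \<in> EE d a b" for x
    using GA.orbit_refl[OF that] that unfolding Orbs_def orbits_def by blast
  have G: "\<exists>S\<subseteq>Orbs d' a b. (\<Sum>Om\<in>Orbs d a b. Nv d a b \<phi> \<chi> Om) = (\<Sum>Om\<in>S. Nv d' a b \<phi> \<chi> Om) \<and>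
     ((\<forall>B\<in>Orbs d' a b. \<exists>y\<in>B. \<exists>A\<in>Orbs d a b. \<exists>x\<in>A. prel a b d d' x y) \<longrightarrow> S = Orbs d' a b)"
  proof (rule orbit_cmp_gen)
    show "\<forall>A\<in>Orbs d a b. \<exists>x\<in>A. \<exists>B\<in>Orbs d' a b. \<exists>y\<in>B. prel a b d d' x y"
    proof
      fix A assume A: "A \<in> Orbs d a b"
      obtain x where x: "x \<in> A" using orbit_nonempty[OF ob(3,1,2) A] by blast
      have xE: "x \<in> EE d a b" using orbit_of_member(2)[OF ob(3,1,2) A x] .
      obtain y where y: "y \<in> EE d' a b" "prel a b d d' x y" using ex xE by blast
      show "\<exists>x\<in>A. \<exists>B\<in>Orbs d' a b. \<exists>y\<in>B. prel a b d d' x y" using x y memB[OF y(1)] by blast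
    qed
  next
    fix A A' B B' x x' y y'
    assume h: "A \<in> Orbs d a b" "A' \<in> Orbs d a b" "B \<in> Orbs d' a b" "B' \<in> Orbs d' a b" "x \<in> A" "x' \<in> A'"
      "y \<in> B" "y' \<in> B'" "prel a b d d' x y" "prel a b d d' x' y'"
    have oA: "A = orbit (Big d a b) (phi d a b) x" "x \<in> EE d a b" using orbit_of_member[OF ob(3,1,2) h(1,5)] by auto
    have oA': "A' = orbit (Big d a b) (phi d a b) x'" "x' \<in> EE d a b" using orbit_of_member[OF ob(3,1,2) h(2,6)] by auto
    have oB: "B = orbit (Big d' a b) (phi d' a b) y" "y \<in> EE d' a b" using orbit_of_member[OF ob(4,1,2) h(3,7)] by auto
    have oB': "B' = orbit (Big d' a b) (phi d' a b) y'" "y' \<in> EE d' a b" using orbit_of_member[OF ob(4,1,2) h(4,8)] by auto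
    show "A = A' \<longleftrightarrow> B = B'"
    proof
      assume "A = A'"
      then have "x' \<in> orbit (Big d a b) (phi d a b) x" using oA oA' GA.orbit_refl[OF oA'(2)] by simp
      then have "y' \<in> orbit (Big d' a b) (phi d' a b) y" using orbit_rel[OF ob oA(2) oB(2) oB'(2) h(9,10)] by simp
      then have "y' \<in> B" using oB by simp
      then show "B = B'" using orbit_of_member(1)[OF ob(4,1,2) h(3)] oB' by simp
    next
      assume "B = B'"
      then have "y' \<in> orbit (Big d' a b) (phi d' a b) y" using oB oB' GB.orbit_refl[OF oB'(2)] by simp
      then have "x' \<in> orbit (Big d a b) (phi d a b) x"
        using orbit_rel[OF ob(1,2,4,3) oB(2) oA(2) oA'(2) prel_sym[OF h(9)] prel_sym[OF h(10)]] by simp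
      then have "x' \<in> A" using oA by simp
      then show "A = A'" using orbit_of_member(1)[OF ob(3,1,2) h(1)] oA' by simp
    qed
  next
    fix A B x y assume h: "A \<in> Orbs d a b" "B \<in> Orbs d' a b" "x \<in> A" "y \<in> B" "prel a b d d' x y"
    have xE: "x \<in> EE d a b" using orbit_of_member(2)[OF ob(3,1,2) h(1,3)] .
    have yE: "y \<in> EE d' a b" using orbit_of_member(2)[OF ob(4,1,2) h(2,4)] .
    have "Nv d a b \<phi> \<chi> A = Nloc d a b \<phi> \<chi> x" using Nloc_orbit[OF ob(3,1,2) ca cb h(1,3)] by simp
    also have "\<dots> = Nloc d' a b \<phi> \<chi> y" using Nloc_rel[OF ob xE yE h(5)] .
    also have "\<dots> = Nv d' a b \<phi> \<chi> B" using Nloc_orbit[OF ob(4,1,2) ca cb h(2,4)] .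
    finally show "Nv d a b \<phi> \<chi> A = Nv d' a b \<phi> \<chi> B" .
  qed
  show ?thesis
  proof -
    obtain S where S: "S \<subseteq> Orbs d' a b" "(\<Sum>Om\<in>Orbs d a b. Nv d a b \<phi> \<chi> Om) = (\<Sum>Om\<in>S. Nv d' a b \<phi> \<chi> Om)"
      "(\<forall>B\<in>Orbs d' a b. \<exists>y\<in>B. \<exists>A\<in>Orbs d a b. \<exists>x\<in>A. prel a b d d' x y) \<longrightarrow> S = Orbs d' a b"
      using G by blast
    have "(\<forall>y\<in>EE d' a b. \<exists>x\<in>EE d a b. prel a b d d' x y) \<longrightarrow> S = Orbs d' a b"
    proof
      assume sur: "\<forall>y\<in>EE d' a b. \<exists>x\<in>EE d a b. prel a b d d' x y"
      have "\<forall>B\<in>Orbs d' a b. \<exists>y\<in>B. \<exists>A\<in>Orbs d a b. \<exists>x\<in>A. prel a b d d' x y"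
      proof
        fix B assume B: "B \<in> Orbs d' a b"
        obtain y where y: "y \<in> B" using orbit_nonempty[OF ob(4,1,2) B] by blast
        have yE: "y \<in> EE d' a b" using orbit_of_member(2)[OF ob(4,1,2) B y] .
        obtain x where x: "x \<in> EE d a b" "prel a b d d' x y" using sur yE by blast
        show "\<exists>y\<in>B. \<exists>A\<in>Orbs d a b. \<exists>x\<in>A. prel a b d d' x y" using y x memA[OF x(1)] by blast
      qed
      then show "S = Orbs d' a b" using S(3) by blast
    qed
    then show ?thesis using S(1,2) by blast
  qed
qed

end

context fic begin

definition Tval where
  "Tval d a b \<phi> \<chi> = (1 / of_nat (card (Aut C d))) * (\<Sum>\<sigma>\<in>Aut C d. Phi a \<phi> d \<sigma> * cnj (Phi b \<chi> d \<sigma>))"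

lemma T_orbits:
  assumes ob: "d \<in> Ob" "a \<in> Ob" "b \<in> Ob" and ca: "clf a \<phi>" and cb: "clf b \<chi>"
  shows "Tval d a b \<phi> \<chi> = (\<Sum>Om\<in>Orbs d a b. Nv d a b \<phi> \<chi> Om)"
  using inner_formula[OF ob] orbit_sum[OF ob ca cb] by (simp add: Tval_def)

lemma pb_of_pair:
  assumes ob: "a \<in> Ob" "b \<in> Ob" "d \<in> Ob" and x: "x \<in> EE d a b"
  shows "\<exists>p\<in>Ob. \<exists>f1 f2. is_pullback_square C p a b d f1 f2 (fst x) (snd x)"
  using pullback_ex[OF ob] x by (auto simp: EE_def)

lemma ex_mono:
  assumes ob: "a \<in> Ob" "b \<in> Ob" "d \<in> Ob" "d' \<in> Ob" and k: "k \<in> Hom d d'"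
  shows "\<forall>x\<in>EE d a b. \<exists>y\<in>EE d' a b. prel a b d d' x y"
proof
  fix x assume x: "x \<in> EE d a b"
  obtain p f1 f2 where p: "p \<in> Ob" and P: "is_pullback_square C p a b d f1 f2 (fst x) (snd x)"
    using pb_of_pair[OF ob(1-3) x] by blast
  have fx: "fst x \<in> Hom a d" "snd x \<in> Hom b d" using x by (auto simp: EE_def)
  have "is_pullback_square C p a b d' f1 f2 (cmp k (fst x)) (cmp k (snd x))"
    using pb_transport[OF p ob(1,2,3,4) k fx] P by simp
  moreover have "(cmp k (fst x), cmp k (snd x)) \<in> EE d' a b" using fx k ob by (auto simp: EE_def)
  ultimately show "\<exists>y\<in>EE d' a b. prel a b d d' x y" using P p unfolding prel_def by force
qed

lemma ex_ge:
  assumes ob: "a \<in> Ob" "b \<in> Ob" "d \<in> Ob" "d' \<in> Ob" "c1 \<in> Ob" "c2 \<in> Ob"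
    and k: "obj_le C a c1" "obj_le C b c2" and ge: "obj_ge_sum C d' c1 c2"
  shows "\<forall>x\<in>EE d a b. \<exists>y\<in>EE d' a b. prel a b d d' x y"
proof
  fix x assume x: "x \<in> EE d a b"
  obtain k1 k2 where k12: "k1 \<in> Hom a c1" "k2 \<in> Hom b c2" using k by (auto simp: obj_le_def)
  obtain p f1 f2 where p: "p \<in> Ob" and P: "is_pullback_square C p a b d f1 f2 (fst x) (snd x)"
    using pb_of_pair[OF ob(1-3) x] by blast
  have f: "f1 \<in> Hom p a" "f2 \<in> Hom p b" using P by (auto simp: is_pullback_square_def)
  obtain y1 y2 where y: "y1 \<in> Hom a d'" "y2 \<in> Hom b d'" "is_pullback_square C p a b d' f1 f2 y1 y2"
    using pb_exists_ge[OF ob(1,2,5,6,4) p k12 f ge] by blast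
  show "\<exists>y\<in>EE d' a b. prel a b d d' x y"
    using y P p unfolding prel_def EE_def by force
qed

lemma T_stable:
  assumes ob: "a \<in> Ob" "b \<in> Ob" "d \<in> Ob" "d' \<in> Ob" "c1 \<in> Ob" "c2 \<in> Ob"
    and k: "obj_le C a c1" "obj_le C b c2" and ge: "obj_ge_sum C d c1 c2" "obj_ge_sum C d' c1 c2"
    and ca: "clf a \<phi>" and cb: "clf b \<chi>"
  shows "Tval d a b \<phi> \<chi> = Tval d' a b \<phi> \<chi>"
proof -
  have e1: "\<forall>x\<in>EE d a b. \<exists>y\<in>EE d' a b. prel a b d d' x y" using ex_ge[OF ob k ge(2)] .
  have e2: "\<forall>y\<in>EE d' a b. \<exists>x\<in>EE d a b. prel a b d d' x y"
    using ex_ge[OF ob(1,2,4,3,5,6) k ge(1)] prel_sym by blast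
  obtain S where S: "S \<subseteq> Orbs d' a b" "(\<Sum>Om\<in>Orbs d a b. Nv d a b \<phi> \<chi> Om) = (\<Sum>Om\<in>S. Nv d' a b \<phi> \<chi> Om)"
    "(\<forall>y\<in>EE d' a b. \<exists>x\<in>EE d a b. prel a b d d' x y) \<longrightarrow> S = Orbs d' a b"
    using orbs_compare[OF ob(1-4) ca cb e1] by blast
  show ?thesis using S e2 T_orbits[OF ob(3,1,2) ca cb] T_orbits[OF ob(4,1,2) ca cb] by simp
qed

lemma clf_trace:
  assumes c: "c \<in> Ob" and r: "is_rep C c k \<rho>"
  shows "clf c (\<lambda>\<psi>. mtrace (\<rho> \<psi>))"
  unfolding clf_def
proof (intro ballI)
  fix \<psi> \<tau> assume h: "\<psi> \<in> Hom c c" "\<tau> \<in> Hom c c"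
  have it: "iv c \<tau> \<in> Hom c c" using c h by simp
  have rr: "\<forall>\<psi>\<in>Hom c c. \<rho> \<psi> \<in> carrier_mat k k" "\<rho> (idm c) = 1\<^sub>m k"
     "\<forall>\<psi>\<in>Hom c c. \<forall>\<psi>'\<in>Hom c c. \<rho> (cmp \<psi> \<psi>') = \<rho> \<psi> * \<rho> \<psi>'"
    using r Aut_eq[OF c] by (auto simp: is_rep_def)
  have m: "\<rho> \<tau> \<in> carrier_mat k k" "\<rho> \<psi> \<in> carrier_mat k k" "\<rho> (iv c \<tau>) \<in> carrier_mat k k"
    using rr h it by auto
  have "\<rho> (cmp (cmp \<tau> \<psi>) (iv c \<tau>)) = \<rho> \<tau> * (\<rho> \<psi> * \<rho> (iv c \<tau>))"
    using rr h it c m by (simp add: assoc_mult_mat[of _ k k _ k _ k])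
  then have "mtrace (\<rho> (cmp (cmp \<tau> \<psi>) (iv c \<tau>))) = mtrace ((\<rho> \<psi> * \<rho> (iv c \<tau>)) * \<rho> \<tau>)"
    using mtrace_mult_comm[of "\<rho> \<tau>" k k "\<rho> \<psi> * \<rho> (iv c \<tau>)"] m by simp
  also have "(\<rho> \<psi> * \<rho> (iv c \<tau>)) * \<rho> \<tau> = \<rho> \<psi> * (\<rho> (iv c \<tau>) * \<rho> \<tau>)"
    using m by (simp add: assoc_mult_mat[of _ k k _ k _ k])
  also have "\<rho> (iv c \<tau>) * \<rho> \<tau> = 1\<^sub>m k" using rr h it c by (metis iv_l)
  finally show "mtrace (\<rho> (cmp (cmp \<tau> \<psi>) (iv c \<tau>))) = mtrace (\<rho> \<psi>)" using m by simp
qed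


lemma Nv_nat:
  assumes ob: "d \<in> Ob" "a \<in> Ob" "b \<in> Ob" and ra: "is_rep C a k \<rho>" and rb: "is_rep C b k' \<rho>'"
    and Om: "Om \<in> Orbs d a b"
  shows "\<exists>n::nat. Nv d a b (\<lambda>\<psi>. mtrace (\<rho> \<psi>)) (\<lambda>\<psi>. mtrace (\<rho>' \<psi>)) Om = of_nat n"
proof -
  interpret GA: group_action "Big d a b" "EE d a b" "phi d a b" using Big_action[OF ob] .
  interpret G: Group.group "Big d a b" using Big_group[OF ob] .
  define x where "x = (SOME x. x \<in> Om)"
  have xO: "x \<in> Om" unfolding x_def using orbit_nonempty[OF ob Om] by (metis someI)
  have xE: "x \<in> EE d a b" using orbit_of_member(2)[OF ob Om xO] .
  have sg: "subgroup (stab d a b x) (Big d a b)" unfolding stab_def by (rule GA.stabilizer_subgroup[OF xE])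
  define H where "H = (Big d a b)\<lparr>carrier := stab d a b x\<rparr>"
  have gH: "Group.group H" unfolding H_def by (rule G.subgroup_imp_group[OF sg])
  have sc: "stab d a b x \<subseteq> carrier (Big d a b)" using subgroup.subset[OF sg] .
  have finH: "finite (carrier H)" unfolding H_def
    using finite_subset[OF sc finite_Big[OF ob]] by simp
  have ra': "\<forall>\<psi>\<in>Hom a a. \<rho> \<psi> \<in> carrier_mat k k" "\<rho> (idm a) = 1\<^sub>m k"
     "\<forall>\<psi>\<in>Hom a a. \<forall>\<psi>'\<in>Hom a a. \<rho> (cmp \<psi> \<psi>') = \<rho> \<psi> * \<rho> \<psi>'"
    using ra Aut_eq[OF ob(2)] by (auto simp: is_rep_def)
  have rb': "\<forall>\<psi>\<in>Hom b b. \<rho>' \<psi> \<in> carrier_mat k' k'" "\<rho>' (idm b) = 1\<^sub>m k'"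
     "\<forall>\<psi>\<in>Hom b b. \<forall>\<psi>'\<in>Hom b b. \<rho>' (cmp \<psi> \<psi>') = \<rho>' \<psi> * \<rho>' \<psi>'"
    using rb Aut_eq[OF ob(3)] by (auto simp: is_rep_def)
  have sc': "fst (snd \<gamma>) \<in> Hom a a \<and> snd (snd \<gamma>) \<in> Hom b b" if "\<gamma> \<in> stab d a b x" for \<gamma>
    using sc that by (auto simp: carrier_Big)
  have g1: "grep H k (\<lambda>\<gamma>. \<rho> (fst (snd \<gamma>)))"
    unfolding grep_def H_def using ra' sc' by (auto simp: one_Big mult_Big)
  have g2: "grep H k' (\<lambda>\<gamma>. \<rho>' (snd (snd \<gamma>)))"
    unfolding grep_def H_def using rb' sc' by (auto simp: one_Big mult_Big)
  obtain n where n: "(1 / of_nat (Coset.order H)) * (\<Sum>h\<in>carrier H. mtrace (\<rho> (fst (snd h))) * cnj (mtrace (\<rho>' (snd (snd h))))) = of_nat n"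
    using group.char_inner_nat[OF gH finH g1 g2] by blast
  have "Nv d a b (\<lambda>\<psi>. mtrace (\<rho> \<psi>)) (\<lambda>\<psi>. mtrace (\<rho>' \<psi>)) Om
      = (1 / of_nat (Coset.order H)) * (\<Sum>h\<in>carrier H. mtrace (\<rho> (fst (snd h))) * cnj (mtrace (\<rho>' (snd (snd h)))))"
    by (simp add: Nv_def Nloc_def x_def[symmetric] H_def Coset.order_def Fv_def)
  then show ?thesis using n by simp
qed

lemma T_nat:
  assumes ob: "d \<in> Ob" "a \<in> Ob" "b \<in> Ob" and ra: "is_rep C a k \<rho>" and rb: "is_rep C b k' \<rho>'"
  shows "\<exists>n::nat. Tval d a b (\<lambda>\<psi>. mtrace (\<rho> \<psi>)) (\<lambda>\<psi>. mtrace (\<rho>' \<psi>)) = of_nat n"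
proof -
  define f where "f Om = (SOME n::nat. Nv d a b (\<lambda>\<psi>. mtrace (\<rho> \<psi>)) (\<lambda>\<psi>. mtrace (\<rho>' \<psi>)) Om = of_nat n)" for Om
  have f: "Nv d a b (\<lambda>\<psi>. mtrace (\<rho> \<psi>)) (\<lambda>\<psi>. mtrace (\<rho>' \<psi>)) Om = of_nat (f Om)" if "Om \<in> Orbs d a b" for Om
    unfolding f_def by (rule someI_ex, rule Nv_nat[OF ob ra rb that])
  have "Tval d a b (\<lambda>\<psi>. mtrace (\<rho> \<psi>)) (\<lambda>\<psi>. mtrace (\<rho>' \<psi>)) = (\<Sum>Om\<in>Orbs d a b. of_nat (f Om))"
    using T_orbits[OF ob clf_trace[OF ob(2) ra] clf_trace[OF ob(3) rb]] f by simp
  then show ?thesis by (metis of_nat_sum)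
qed

lemma T_mono:
  assumes ob: "a \<in> Ob" "b \<in> Ob" "d \<in> Ob" "d' \<in> Ob" and le: "obj_le C d d'"
    and ra: "is_rep C a k \<rho>" and rb: "is_rep C b k' \<rho>'"
  shows "\<exists>m n::nat. Tval d a b (\<lambda>\<psi>. mtrace (\<rho> \<psi>)) (\<lambda>\<psi>. mtrace (\<rho>' \<psi>)) = of_nat m \<and>
           Tval d' a b (\<lambda>\<psi>. mtrace (\<rho> \<psi>)) (\<lambda>\<psi>. mtrace (\<rho>' \<psi>)) = of_nat n \<and> m \<le> n"
proof -
  let ?p = "\<lambda>\<psi>. mtrace (\<rho> \<psi>)" and ?q = "\<lambda>\<psi>. mtrace (\<rho>' \<psi>)"
  have ca: "clf a ?p" using clf_trace[OF ob(1) ra] .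
  have cb: "clf b ?q" using clf_trace[OF ob(2) rb] .
  obtain k0 where k0: "k0 \<in> Hom d d'" using le by (auto simp: obj_le_def)
  obtain S where S: "S \<subseteq> Orbs d' a b" "(\<Sum>Om\<in>Orbs d a b. Nv d a b ?p ?q Om) = (\<Sum>Om\<in>S. Nv d' a b ?p ?q Om)"
    using orbs_compare[OF ob ca cb ex_mono[OF ob k0]] by blast
  define f where "f Om = (SOME n::nat. Nv d' a b ?p ?q Om = of_nat n)" for Om
  have f: "Nv d' a b ?p ?q Om = of_nat (f Om)" if "Om \<in> Orbs d' a b" for Om
    unfolding f_def by (rule someI_ex, rule Nv_nat[OF ob(4,1,2) ra rb that])
  have "Orbs d' a b = (\<lambda>x. orbit (Big d' a b) (phi d' a b) x) ` EE d' a b"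
    unfolding Orbs_def orbits_def by blast
  then have finO: "finite (Orbs d' a b)"
    using finite_EE[OF ob(4,1,2)] by simp
  have "Tval d a b ?p ?q = (\<Sum>Om\<in>S. of_nat (f Om))"
    using T_orbits[OF ob(3,1,2) ca cb] S f by (simp add: subset_iff)
  moreover have "Tval d' a b ?p ?q = (\<Sum>Om\<in>Orbs d' a b. of_nat (f Om))"
    using T_orbits[OF ob(4,1,2) ca cb] f by simp
  moreover have "(\<Sum>Om\<in>S. f Om) \<le> (\<Sum>Om\<in>Orbs d' a b. f Om)"
    by (rule sum_mono2[OF finO S(1)]) simp
  ultimately show ?thesis by (metis of_nat_sum)
qed

end

context fic begin

lemma cmp_AG: "cmp x y = x \<otimes>\<^bsub>AG c\<^esub> y" by (simp add: AG_def)
lemma carrier_AG: "carrier (AG c) = Hom c c" by (simp add: AG_def)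

lemma conj_closed:
  assumes c: "c \<in> Ob" and p0: "\<psi>0 \<in> Hom c c" and \<psi>: "\<psi> \<in> conj_class C c \<psi>0" and al: "\<alpha> \<in> Hom c c"
  shows "cmp (cmp \<alpha> \<psi>) (iv c \<alpha>) \<in> conj_class C c \<psi>0"
proof -
  interpret G: Group.group "AG c" using AG_group[OF c] .
  obtain \<tau> where t: "\<tau> \<in> Hom c c" "\<psi> \<in> Hom c c" "cmp \<tau> \<psi>0 = cmp \<psi> \<tau>"
    using \<psi> Aut_eq[OF c] by (auto simp: conj_class_def)
  have A: "\<alpha> \<in> carrier (AG c)" "\<tau> \<in> carrier (AG c)" "\<psi> \<in> carrier (AG c)" "\<psi>0 \<in> carrier (AG c)"
    using al t p0 by (auto simp: carrier_AG)
  have t': "\<tau> \<otimes>\<^bsub>AG c\<^esub> \<psi>0 = \<psi> \<otimes>\<^bsub>AG c\<^esub> \<tau>" using t(3) by (simp add: cmp_AG[where c=c])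
  have "(\<alpha> \<otimes>\<^bsub>AG c\<^esub> \<tau>) \<otimes>\<^bsub>AG c\<^esub> \<psi>0 = \<alpha> \<otimes>\<^bsub>AG c\<^esub> (\<psi> \<otimes>\<^bsub>AG c\<^esub> \<tau>)"
    using A t' by (simp add: G.m_assoc)
  also have "\<dots> = (\<alpha> \<otimes>\<^bsub>AG c\<^esub> \<psi> \<otimes>\<^bsub>AG c\<^esub> inv\<^bsub>AG c\<^esub> \<alpha>) \<otimes>\<^bsub>AG c\<^esub> (\<alpha> \<otimes>\<^bsub>AG c\<^esub> \<tau>)"
  proof -
    have c1: "inv\<^bsub>AG c\<^esub> \<alpha> \<otimes>\<^bsub>AG c\<^esub> (\<alpha> \<otimes>\<^bsub>AG c\<^esub> \<tau>) = \<tau>" using A by (simp add: G.m_assoc[symmetric])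
    show ?thesis using A c1 by (simp add: G.m_assoc)
  qed
  finally have e: "(\<alpha> \<otimes>\<^bsub>AG c\<^esub> \<tau>) \<otimes>\<^bsub>AG c\<^esub> \<psi>0 = (\<alpha> \<otimes>\<^bsub>AG c\<^esub> \<psi> \<otimes>\<^bsub>AG c\<^esub> inv\<^bsub>AG c\<^esub> \<alpha>) \<otimes>\<^bsub>AG c\<^esub> (\<alpha> \<otimes>\<^bsub>AG c\<^esub> \<tau>)" .
  have "\<alpha> \<otimes>\<^bsub>AG c\<^esub> \<tau> \<in> Hom c c" "\<alpha> \<otimes>\<^bsub>AG c\<^esub> \<psi> \<otimes>\<^bsub>AG c\<^esub> inv\<^bsub>AG c\<^esub> \<alpha> \<in> Hom c c"
    using A by (auto simp: carrier_AG[symmetric])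
  then show ?thesis using e Aut_eq[OF c] unfolding conj_class_def
    by (auto simp: cmp_AG[where c=c] iv_def)
qed

lemma conj_class_sub: "c \<in> Ob \<Longrightarrow> conj_class C c \<psi>0 \<subseteq> Hom c c"
  using Aut_eq by (auto simp: conj_class_def)

lemma clf_ind:
  assumes c: "c \<in> Ob" and p0: "\<psi>0 \<in> Hom c c"
  shows "clf c (\<lambda>\<psi>. if \<psi> \<in> conj_class C c \<psi>0 then 1 else 0)"
  unfolding clf_def
proof (intro ballI)
  fix \<psi> \<tau> assume h: "\<psi> \<in> Hom c c" "\<tau> \<in> Hom c c"
  interpret G: Group.group "AG c" using AG_group[OF c] .
  let ?m = "conj_class C c \<psi>0"
  have "cmp (cmp \<tau> \<psi>) (iv c \<tau>) \<in> ?m \<longleftrightarrow> \<psi> \<in> ?m"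
  proof
    assume "\<psi> \<in> ?m" then show "cmp (cmp \<tau> \<psi>) (iv c \<tau>) \<in> ?m" using conj_closed[OF c p0 _ h(2)] by simp
  next
    assume a: "cmp (cmp \<tau> \<psi>) (iv c \<tau>) \<in> ?m"
    have it: "iv c \<tau> \<in> Hom c c" using c h by simp
    have "cmp (cmp (iv c \<tau>) (cmp (cmp \<tau> \<psi>) (iv c \<tau>))) (iv c (iv c \<tau>)) \<in> ?m"
      using conj_closed[OF c p0 a it] .
    moreover have "cmp (cmp (iv c \<tau>) (cmp (cmp \<tau> \<psi>) (iv c \<tau>))) (iv c (iv c \<tau>)) = \<psi>"
      using h by (simp add: cmp_AG[where c=c] iv_def carrier_AG[symmetric] G.m_assoc G.inv_solve_left' del: G.inv_inv)
    ultimately show "\<psi> \<in> ?m" by simp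
  qed
  then show "(if cmp (cmp \<tau> \<psi>) (iv c \<tau>) \<in> ?m then 1 else 0) = (if \<psi> \<in> ?m then 1 else (0::complex))" by simp
qed


lemma binomX_Phi:
  assumes c: "c \<in> Ob" and d: "d \<in> Ob" and p0: "\<psi>0 \<in> Hom c c" and s: "\<sigma> \<in> Hom d d"
  shows "binomX C c (conj_class C c \<psi>0) d \<sigma> = Phi c (\<lambda>\<psi>. if \<psi> \<in> conj_class C c \<psi>0 then 1 else 0) d \<sigma>"
proof -
  let ?m = "conj_class C c \<psi>0"
  define A where "A = {f\<in>Hom c d. \<exists>\<psi>\<in>?m. cmp \<sigma> f = cmp f \<psi>}"
  define orb where "orb f = {cmp f \<psi> | \<psi>. \<psi> \<in> Aut C c}" for f
  define Bs where "Bs = {B \<in> binom_set C d c. \<exists>f\<in>B. \<exists>\<psi>\<in>?m. cmp \<sigma> f = cmp f \<psi>}"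
  have msub: "?m \<subseteq> Hom c c" using conj_class_sub[OF c] .
  have AutC: "Aut C c = Hom c c" using Aut_eq[OF c] .
  have bs: "binom_set C d c = orb ` Hom c d" by (auto simp: binom_set_def orb_def)
  have orb_sub: "orb f \<subseteq> Hom c d" if fH: "f \<in> Hom c d" for f
  proof
    fix g assume "g \<in> orb f"
    then obtain \<psi> where "\<psi> \<in> Hom c c" "g = cmp f \<psi>" using AutC by (auto simp: orb_def)
    then show "g \<in> Hom c d" using comp_hom[OF c c d _ fH] by simp
  qed
  have orb_self: "f \<in> orb f" if fH: "f \<in> Hom c d" for f
  proof -
    have "f = cmp f (idm c)" using id_r[OF c d fH] by simp
    moreover have "idm c \<in> Aut C c" using AutC id_hom[OF c] by simp
    ultimately show ?thesis unfolding orb_def by blast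
  qed
  have orb_card: "card (orb f) = card (Hom c c)" if f: "f \<in> Hom c d" for f
  proof -
    have "orb f = (\<lambda>\<psi>. cmp f \<psi>) ` Hom c c" using AutC by (auto simp: orb_def)
    moreover have "inj_on (\<lambda>\<psi>. cmp f \<psi>) (Hom c c)" using mono[OF c d c f] by (auto intro: inj_onI)
    ultimately show ?thesis by (simp add: card_image)
  qed
  have orb_mem: "orb f' = orb f" if f: "f \<in> Hom c d" and f': "f' \<in> orb f" for f f'
  proof -
    interpret G: Group.group "AG c" using AG_group[OF c] .
    obtain \<psi> where p: "\<psi> \<in> Hom c c" "f' = cmp f \<psi>" using f' AutC by (auto simp: orb_def)
    show ?thesis
    proof
      show "orb f' \<subseteq> orb f"
      proof
        fix g assume "g \<in> orb f'"
        then obtain \<psi>' where "\<psi>' \<in> Hom c c" "g = cmp f' \<psi>'" using AutC by (auto simp: orb_def)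
        then show "g \<in> orb f" using p assoc[of c c c d \<psi>' \<psi> f] c d f AutC unfolding orb_def
          by (intro CollectI exI[of _ "cmp \<psi> \<psi>'"]) auto
      qed
    next
      show "orb f \<subseteq> orb f'"
      proof
        fix g assume "g \<in> orb f"
        then obtain \<psi>' where ps: "\<psi>' \<in> Hom c c" "g = cmp f \<psi>'" using AutC by (auto simp: orb_def)
        have i: "iv c \<psi> \<in> Hom c c" using p c by simp
        have "cmp f' (cmp (iv c \<psi>) \<psi>') = cmp (cmp f (cmp \<psi> (iv c \<psi>))) \<psi>'"
          using p ps i c d f assoc[of c c c d "cmp (iv c \<psi>) \<psi>'" \<psi> f] assoc[of c c c c \<psi>' "iv c \<psi>" \<psi>]
            assoc[of c c c d \<psi>' "cmp \<psi> (iv c \<psi>)" f] by auto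
        also have "\<dots> = g" using p ps c d f by simp
        finally show "g \<in> orb f'" using i ps c AutC unfolding orb_def
          by (intro CollectI exI[of _ "cmp (iv c \<psi>) \<psi>'"]) auto
      qed
    qed
  qed
  have goodA: "orb f \<subseteq> A" if f: "f \<in> A" for f
  proof
    fix g assume "g \<in> orb f"
    then obtain \<tau> where t: "\<tau> \<in> Hom c c" "g = cmp f \<tau>" using AutC by (auto simp: orb_def)
    obtain \<psi> where ps: "\<psi> \<in> ?m" "cmp \<sigma> f = cmp f \<psi>" and fH: "f \<in> Hom c d" using f by (auto simp: A_def)
    have psH: "\<psi> \<in> Hom c c" using ps msub by auto
    have it: "iv c \<tau> \<in> Hom c c" using t c by simp
    have "cmp (cmp (iv c \<tau>) \<psi>) (iv c (iv c \<tau>)) \<in> ?m" using conj_closed[OF c p0 ps(1) it] .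
    then have m': "cmp (cmp (iv c \<tau>) \<psi>) \<tau> \<in> ?m" using iv_iv[OF c t(1)] by simp
    have "cmp \<sigma> g = cmp (cmp f \<psi>) \<tau>" using t ps s fH c d assoc[of c c d d \<tau> f \<sigma>] by simp
    also have "\<dots> = cmp g (cmp (cmp (iv c \<tau>) \<psi>) \<tau>)"
    proof -
      have "cmp g (cmp (cmp (iv c \<tau>) \<psi>) \<tau>) = cmp f (cmp \<tau> (cmp (cmp (iv c \<tau>) \<psi>) \<tau>))"
        using t fH c d it psH assoc[of c c c d "cmp (cmp (iv c \<tau>) \<psi>) \<tau>" \<tau> f] by auto
      also have "cmp \<tau> (cmp (cmp (iv c \<tau>) \<psi>) \<tau>) = cmp \<psi> \<tau>"
      proof -
        interpret G: Group.group "AG c" using AG_group[OF c] .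
        show ?thesis using t psH
          by (simp add: cmp_AG[where c=c] iv_def carrier_AG[symmetric] G.m_assoc[symmetric])
      qed
      also have "cmp f (cmp \<psi> \<tau>) = cmp (cmp f \<psi>) \<tau>" using fH psH t c d assoc[of c c c d \<tau> \<psi> f] by simp
      finally show ?thesis by simp
    qed
    finally show "g \<in> A" using m' t fH c d unfolding A_def by auto
  qed
  have UA: "\<Union>Bs = A"
  proof
    show "\<Union>Bs \<subseteq> A"
    proof
      fix g assume "g \<in> \<Union>Bs"
      then obtain f f' \<psi> where "f \<in> Hom c d" "g \<in> orb f" "f' \<in> orb f" "\<psi> \<in> ?m" "cmp \<sigma> f' = cmp f' \<psi>"
        by (auto simp: Bs_def bs)
      then show "g \<in> A" using goodA[of f'] orb_mem orb_sub unfolding A_def by blast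
    qed
    show "A \<subseteq> \<Union>Bs"
    proof
      fix f assume f: "f \<in> A"
      then have fH: "f \<in> Hom c d" by (simp add: A_def)
      have "orb f \<in> Bs" using f fH orb_self[OF fH] unfolding Bs_def bs A_def by blast
      then show "f \<in> \<Union>Bs" using orb_self[OF fH] by blast
    qed
  qed
  have BsO: "B \<in> Bs \<Longrightarrow> \<exists>f\<in>Hom c d. B = orb f" for B unfolding Bs_def using bs by blast
  have finBs: "finite Bs"
  proof (rule finite_subset[of Bs "orb ` Hom c d"])
    show "Bs \<subseteq> orb ` Hom c d" using BsO by blast
    show "finite (orb ` Hom c d)" using fin_hom[OF c d] by blast
  qed
  have cardB: "\<forall>B\<in>Bs. card B = card (Hom c c)" using orb_card BsO by blast
  have disj: "\<forall>B1\<in>Bs. \<forall>B2\<in>Bs. B1 \<noteq> B2 \<longrightarrow> B1 \<inter> B2 = {}"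
  proof (intro ballI impI)
    fix B1 B2 assume h: "B1 \<in> Bs" "B2 \<in> Bs" "B1 \<noteq> B2"
    then obtain f1 f2 where f: "f1 \<in> Hom c d" "B1 = orb f1" "f2 \<in> Hom c d" "B2 = orb f2" using BsO by meson
    show "B1 \<inter> B2 = {}"
    proof (rule ccontr)
      assume "B1 \<inter> B2 \<noteq> {}"
      then obtain g where "g \<in> orb f1" "g \<in> orb f2" using f by auto
      then have "orb g = orb f1" "orb g = orb f2" using orb_mem f by blast+
      then show False using h f by simp
    qed
  qed
  have finA: "finite A" using fin_hom[OF c d] by (simp add: A_def)
  have key: "card (Hom c c) * card Bs = card A"
  proof -
    have fU: "finite (\<Union>Bs)" using UA finA by simp
    show ?thesis using card_partition[OF finBs fU cardB[rule_format] disj[rule_format]] UA by simp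
  qed
  have "binomX C c ?m d \<sigma> = of_nat (card Bs)" by (simp add: binomX_def Bs_def)
  moreover have "Phi c (\<lambda>\<psi>. if \<psi> \<in> ?m then 1 else 0) d \<sigma> = (1 / of_nat (card (Hom c c))) * of_nat (card A)"
  proof -
    have "(\<Sum>f\<in>Hom c d. if (\<exists>\<psi>\<in>Aut C c. cmp \<sigma> f = cmp f \<psi>) then (if (THE \<psi>. \<psi> \<in> Aut C c \<and> cmp \<sigma> f = cmp f \<psi>) \<in> ?m then 1 else 0) else 0)
        = (\<Sum>f\<in>Hom c d. if f \<in> A then 1 else (0::complex))"
    proof (rule sum.cong[OF refl])
      fix f assume fH: "f \<in> Hom c d"
      show "(if (\<exists>\<psi>\<in>Aut C c. cmp \<sigma> f = cmp f \<psi>) then (if (THE \<psi>. \<psi> \<in> Aut C c \<and> cmp \<sigma> f = cmp f \<psi>) \<in> ?m then 1 else 0) else 0)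
          = (if f \<in> A then 1 else (0::complex))"
      proof (cases "\<exists>\<psi>\<in>Aut C c. cmp \<sigma> f = cmp f \<psi>")
        case True
        then obtain p where p: "p \<in> Hom c c" "cmp \<sigma> f = cmp f p" using AutC by auto
        have th: "(THE \<psi>. \<psi> \<in> Aut C c \<and> cmp \<sigma> f = cmp f \<psi>) = p" using the_psi[OF c d fH p] .
        have "f \<in> A \<longleftrightarrow> p \<in> ?m"
        proof
          assume "f \<in> A"
          then obtain q where q: "q \<in> ?m" "cmp \<sigma> f = cmp f q" by (auto simp: A_def)
          then have "q = p" using mono[OF c d c fH, of q p] p msub by auto
          then show "p \<in> ?m" using q by simp
        qed (use p fH in \<open>auto simp: A_def\<close>)
        then show ?thesis using True th by simp
      next
        case False
        then have "f \<notin> A" using msub AutC by (auto simp: A_def)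
        then show ?thesis using False by simp
      qed
    qed
    also have "\<dots> = of_nat (card A)"
      by (simp add: sum.If_cases[OF fin_hom[OF c d]] A_def Int_def)
    finally show ?thesis by (simp add: Phi_def AutC)
  qed
  moreover have pos: "card (Hom c c) > 0" using fin_hom[OF c c] id_hom[OF c] card_gt_0_iff by blast
  moreover have "(1 / of_nat (card (Hom c c))) * (of_nat (card A) :: complex) = of_nat (card Bs)"
  proof -
    have "(of_nat (card A) :: complex) = of_nat (card (Hom c c)) * of_nat (card Bs)" using key[symmetric] by simp
    then show ?thesis using pos by simp
  qed
  ultimately show ?thesis by simp
qed

end

context fic begin

lemma inner_bilinear:
  assumes d: "d \<in> Ob"
    and P: "\<forall>\<sigma>\<in>Aut C d. P d \<sigma> = (\<Sum>i<n. \<alpha> i * Phi (e i) (\<phi> i) d \<sigma>)"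
    and Q: "\<forall>\<sigma>\<in>Aut C d. Q d \<sigma> = (\<Sum>j<m. \<beta> j * Phi (e' j) (\<chi> j) d \<sigma>)"
  shows "inner_G C P Q d = (\<Sum>i<n. \<Sum>j<m. \<alpha> i * cnj (\<beta> j) * Tval d (e i) (e' j) (\<phi> i) (\<chi> j))"
proof -
  let ?c = "1 / of_nat (card (Aut C d)) :: complex"
  have "inner_G C P Q d = ?c * (\<Sum>\<sigma>\<in>Aut C d. \<Sum>i<n. \<Sum>j<m. \<alpha> i * cnj (\<beta> j) * (Phi (e i) (\<phi> i) d \<sigma> * cnj (Phi (e' j) (\<chi> j) d \<sigma>)))"
    unfolding inner_G_def
  proof (rule arg_cong[where f = "\<lambda>x. ?c * x"], rule sum.cong[OF refl])
    fix \<sigma> assume s: "\<sigma> \<in> Aut C d"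
    have "P d \<sigma> * cnj (Q d \<sigma>) = (\<Sum>i<n. \<alpha> i * Phi (e i) (\<phi> i) d \<sigma>) * (\<Sum>j<m. cnj (\<beta> j) * cnj (Phi (e' j) (\<chi> j) d \<sigma>))"
      using P Q s by (simp add: cnj_sum)
    also have "\<dots> = (\<Sum>i<n. \<Sum>j<m. \<alpha> i * cnj (\<beta> j) * (Phi (e i) (\<phi> i) d \<sigma> * cnj (Phi (e' j) (\<chi> j) d \<sigma>)))"
      by (simp add: sum_product mult_ac)
    finally show "P d \<sigma> * cnj (Q d \<sigma>) = (\<Sum>i<n. \<Sum>j<m. \<alpha> i * cnj (\<beta> j) * (Phi (e i) (\<phi> i) d \<sigma> * cnj (Phi (e' j) (\<chi> j) d \<sigma>)))" .
  qed
  also have "\<dots> = ?c * (\<Sum>i<n. \<Sum>j<m. \<Sum>\<sigma>\<in>Aut C d. \<alpha> i * cnj (\<beta> j) * (Phi (e i) (\<phi> i) d \<sigma> * cnj (Phi (e' j) (\<chi> j) d \<sigma>)))"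
    by (subst sum.swap, rule arg_cong[where f = "\<lambda>x. ?c * x"], rule sum.cong[OF refl], rule sum.swap)
  also have "\<dots> = (\<Sum>i<n. \<Sum>j<m. \<alpha> i * cnj (\<beta> j) * Tval d (e i) (e' j) (\<phi> i) (\<chi> j))"
    unfolding Tval_def by (simp add: sum_distrib_left sum_distrib_right[symmetric] mult.assoc mult.left_commute)
  finally show ?thesis .
qed

end

theorem mainTheorem14:
  fixes C :: "('o, 'm) cat"
    and P Q :: "'o \<Rightarrow> 'm \<Rightarrow> complex"
    and c1 c2 :: 'o
  assumes "FI_type C"
    and "c1 \<in> cOb C" and "c2 \<in> cOb C"
    and "char_poly_deg_le C P c1"
    and "char_poly_deg_le C Q c2"
  shows "(\<forall>d\<in>cOb C. \<forall>d'\<in>cOb C. obj_ge_sum C d c1 c2 \<and> obj_ge_sum C d' c1 c2 \<longrightarrow>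
            inner_G C P Q d = inner_G C P Q d')
       \<and> (is_free_char C P \<and> is_free_char C Q \<longrightarrow>
            (\<forall>d\<in>cOb C. \<exists>n::nat. inner_G C P Q d = of_nat n) \<and>
            (\<forall>d\<in>cOb C. \<forall>d'\<in>cOb C. obj_le C d d' \<longrightarrow>
               (\<exists>m n :: nat. inner_G C P Q d = of_nat m \<and> inner_G C P Q d' = of_nat n \<and> m \<le> n)))"
proof -
  interpret fic C using assms(1) by (simp add: fic_def)
  obtain n \<alpha> e \<mu> where Pd: "\<forall>i<(n::nat). e i \<in> Ob \<and> is_conj_class C (e i) (\<mu> i) \<and> obj_le C (e i) c1"
    "\<forall>d\<in>Ob. \<forall>\<sigma>\<in>Aut C d. P d \<sigma> = (\<Sum>i<n. \<alpha> i * binomX C (e i) (\<mu> i) d \<sigma>)"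
    using assms(4) unfolding char_poly_deg_le_def by (elim exE conjE) (rule that; assumption)
  obtain m \<beta> e' \<nu> where Qd: "\<forall>i<(m::nat). e' i \<in> Ob \<and> is_conj_class C (e' i) (\<nu> i) \<and> obj_le C (e' i) c2"
    "\<forall>d\<in>Ob. \<forall>\<sigma>\<in>Aut C d. Q d \<sigma> = (\<Sum>i<m. \<beta> i * binomX C (e' i) (\<nu> i) d \<sigma>)"
    using assms(5) unfolding char_poly_deg_le_def by (elim exE conjE) (rule that; assumption)
  have part1: "inner_G C P Q d = inner_G C P Q d'"
    if d: "d \<in> Ob" "d' \<in> Ob" "obj_ge_sum C d c1 c2" "obj_ge_sum C d' c1 c2" for d d'
  proof -
    define p0 where "p0 i = (SOME p. p \<in> Aut C (e i) \<and> \<mu> i = conj_class C (e i) p)" for i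
    define q0 where "q0 i = (SOME p. p \<in> Aut C (e' i) \<and> \<nu> i = conj_class C (e' i) p)" for i
    have p0: "p0 i \<in> Hom (e i) (e i) \<and> \<mu> i = conj_class C (e i) (p0 i)" if "i < n" for i
    proof -
      have "\<exists>p. p \<in> Aut C (e i) \<and> \<mu> i = conj_class C (e i) p" using Pd(1) that by (auto simp: is_conj_class_def)
      then have "p0 i \<in> Aut C (e i) \<and> \<mu> i = conj_class C (e i) (p0 i)" unfolding p0_def by (rule someI_ex)
      then show ?thesis using Aut_eq Pd(1) that by simp
    qed
    have q0: "q0 i \<in> Hom (e' i) (e' i) \<and> \<nu> i = conj_class C (e' i) (q0 i)" if "i < m" for i
    proof -
      have "\<exists>p. p \<in> Aut C (e' i) \<and> \<nu> i = conj_class C (e' i) p" using Qd(1) that by (auto simp: is_conj_class_def)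
      then have "q0 i \<in> Aut C (e' i) \<and> \<nu> i = conj_class C (e' i) (q0 i)" unfolding q0_def by (rule someI_ex)
      then show ?thesis using Aut_eq Qd(1) that by simp
    qed
    define \<phi> where "\<phi> i = (\<lambda>\<psi>. if \<psi> \<in> \<mu> i then 1 else 0 :: complex)" for i
    define \<chi> where "\<chi> i = (\<lambda>\<psi>. if \<psi> \<in> \<nu> i then 1 else 0 :: complex)" for i
    have PP: "\<forall>\<sigma>\<in>Aut C x. P x \<sigma> = (\<Sum>i<n. \<alpha> i * Phi (e i) (\<phi> i) x \<sigma>)" if x: "x \<in> Ob" for x
    proof
      fix \<sigma> assume s: "\<sigma> \<in> Aut C x"
      have "binomX C (e i) (\<mu> i) x \<sigma> = Phi (e i) (\<phi> i) x \<sigma>" if i: "i < n" for i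
        using binomX_Phi[of "e i" x "p0 i" \<sigma>] p0[OF i] Pd(1) i x s Aut_eq[OF x] by (simp add: \<phi>_def)
      then show "P x \<sigma> = (\<Sum>i<n. \<alpha> i * Phi (e i) (\<phi> i) x \<sigma>)" using Pd(2) x s by simp
    qed
    have QQ: "\<forall>\<sigma>\<in>Aut C x. Q x \<sigma> = (\<Sum>i<m. \<beta> i * Phi (e' i) (\<chi> i) x \<sigma>)" if x: "x \<in> Ob" for x
    proof
      fix \<sigma> assume s: "\<sigma> \<in> Aut C x"
      have "binomX C (e' i) (\<nu> i) x \<sigma> = Phi (e' i) (\<chi> i) x \<sigma>" if i: "i < m" for i
        using binomX_Phi[of "e' i" x "q0 i" \<sigma>] q0[OF i] Qd(1) i x s Aut_eq[OF x] by (simp add: \<chi>_def)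
      then show "Q x \<sigma> = (\<Sum>i<m. \<beta> i * Phi (e' i) (\<chi> i) x \<sigma>)" using Qd(2) x s by simp
    qed
    have T: "Tval d (e i) (e' j) (\<phi> i) (\<chi> j) = Tval d' (e i) (e' j) (\<phi> i) (\<chi> j)" if ij: "i < n" "j < m" for i j
    proof (rule T_stable)
      show "e i \<in> Ob" "e' j \<in> Ob" "obj_le C (e i) c1" "obj_le C (e' j) c2" using Pd(1) Qd(1) ij by auto
      show "clf (e i) (\<phi> i)" using clf_ind[of "e i" "p0 i"] p0[OF ij(1)] Pd(1) ij by (simp add: \<phi>_def)
      show "clf (e' j) (\<chi> j)" using clf_ind[of "e' j" "q0 j"] q0[OF ij(2)] Qd(1) ij by (simp add: \<chi>_def)
    qed (use d assms(2,3) in auto)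
    show ?thesis
      using inner_bilinear[where P=P and Q=Q and n=n and m=m and \<alpha>=\<alpha> and \<beta>=\<beta> and e=e and e'=e' and \<phi>=\<phi> and \<chi>=\<chi>, OF d(1) PP[OF d(1)] QQ[OF d(1)]]
        inner_bilinear[where P=P and Q=Q and n=n and m=m and \<alpha>=\<alpha> and \<beta>=\<beta> and e=e and e'=e' and \<phi>=\<phi> and \<chi>=\<chi>, OF d(2) PP[OF d(2)] QQ[OF d(2)]] T
      by simp
  qed
  have part2: "is_free_char C P \<and> is_free_char C Q \<longrightarrow> (\<forall>d\<in>Ob. \<exists>n::nat. inner_G C P Q d = of_nat n) \<and>
            (\<forall>d\<in>Ob. \<forall>d'\<in>Ob. obj_le C d d' \<longrightarrow>
               (\<exists>m n :: nat. inner_G C P Q d = of_nat m \<and> inner_G C P Q d' = of_nat n \<and> m \<le> n))"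
    (is "_ \<longrightarrow> ?G")
  proof
    assume "is_free_char C P \<and> is_free_char C Q"
    then have fr: "is_free_char C P" "is_free_char C Q" by auto
    obtain n e k \<rho> where Pf: "\<forall>i<(n::nat). e i \<in> Ob \<and> is_rep C (e i) (k i) (\<rho> i)"
      "\<forall>d\<in>Ob. \<forall>\<sigma>\<in>Aut C d. P d \<sigma> = (\<Sum>i<n. ind_char C (e i) (\<rho> i) d \<sigma>)"
      using fr(1) unfolding is_free_char_def by (elim exE conjE) (rule that; assumption)
    obtain m e' k' \<rho>' where Qf: "\<forall>i<(m::nat). e' i \<in> Ob \<and> is_rep C (e' i) (k' i) (\<rho>' i)"
      "\<forall>d\<in>Ob. \<forall>\<sigma>\<in>Aut C d. Q d \<sigma> = (\<Sum>i<m. ind_char C (e' i) (\<rho>' i) d \<sigma>)"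
      using fr(2) unfolding is_free_char_def by (elim exE conjE) (rule that; assumption)
    define \<phi> where "\<phi> i = (\<lambda>\<psi>. mtrace (\<rho> i \<psi>))" for i
    define \<chi> where "\<chi> i = (\<lambda>\<psi>. mtrace (\<rho>' i \<psi>))" for i
    have ic: "ind_char C c r x \<sigma> = Phi c (\<lambda>\<psi>. mtrace (r \<psi>)) x \<sigma>" for c r x \<sigma>
      by (simp add: ind_char_def Phi_def)
    have PP: "\<forall>\<sigma>\<in>Aut C x. P x \<sigma> = (\<Sum>i<n. (\<lambda>_. 1) i * Phi (e i) (\<phi> i) x \<sigma>)" if x: "x \<in> Ob" for x
      using Pf(2) x by (simp add: ic \<phi>_def)
    have QQ: "\<forall>\<sigma>\<in>Aut C x. Q x \<sigma> = (\<Sum>i<m. (\<lambda>_. 1) i * Phi (e' i) (\<chi> i) x \<sigma>)" if x: "x \<in> Ob" for x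
      using Qf(2) x by (simp add: ic \<chi>_def)
    have IG: "inner_G C P Q x = (\<Sum>i<n. \<Sum>j<m. Tval x (e i) (e' j) (\<phi> i) (\<chi> j))" if x: "x \<in> Ob" for x
      using inner_bilinear[where P=P and Q=Q and n=n and m=m and \<alpha>="\<lambda>_. 1" and \<beta>="\<lambda>_. 1" and e=e and e'=e' and \<phi>=\<phi> and \<chi>=\<chi>, OF x PP[OF x] QQ[OF x]] by simp
    define N where "N x i j = (SOME t::nat. Tval x (e i) (e' j) (\<phi> i) (\<chi> j) = of_nat t)" for x i j
    have N: "Tval x (e i) (e' j) (\<phi> i) (\<chi> j) = of_nat (N x i j)" if "x \<in> Ob" "i < n" "j < m" for x i j
      unfolding N_def \<phi>_def \<chi>_def
      by (rule someI_ex, rule T_nat) (use that Pf(1) Qf(1) in auto)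
    have IGN: "inner_G C P Q x = of_nat (\<Sum>i<n. \<Sum>j<m. N x i j)" if x: "x \<in> Ob" for x
      using IG[OF x] N[OF x] by simp
    have mono: "N x i j \<le> N y i j" if xy: "x \<in> Ob" "y \<in> Ob" "obj_le C x y" "i < n" "j < m" for x y i j
    proof -
      obtain a b where ab: "Tval x (e i) (e' j) (\<phi> i) (\<chi> j) = of_nat a" "Tval y (e i) (e' j) (\<phi> i) (\<chi> j) = of_nat b" "a \<le> b"
        unfolding \<phi>_def \<chi>_def using T_mono[of "e i" "e' j" x y "k i" "\<rho> i" "k' j" "\<rho>' j"] xy Pf(1) Qf(1) by auto
      then show ?thesis using N[of x i j] N[of y i j] xy by simp
    qed
    show ?G
    proof
      show "\<forall>d\<in>Ob. \<exists>n::nat. inner_G C P Q d = of_nat n" using IGN by blast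
      show "\<forall>d\<in>Ob. \<forall>d'\<in>Ob. obj_le C d d' \<longrightarrow>
               (\<exists>m n :: nat. inner_G C P Q d = of_nat m \<and> inner_G C P Q d' = of_nat n \<and> m \<le> n)"
      proof (intro ballI impI)
        fix d d' assume dd: "d \<in> Ob" "d' \<in> Ob" "obj_le C d d'"
        have "(\<Sum>i<n. \<Sum>j<m. N d i j) \<le> (\<Sum>i<n. \<Sum>j<m. N d' i j)"
          by (intro sum_mono) (use mono dd in auto)
        then show "\<exists>m n :: nat. inner_G C P Q d = of_nat m \<and> inner_G C P Q d' = of_nat n \<and> m \<le> n"
          using IGN[OF dd(1)] IGN[OF dd(2)] by blast
      qed
    qed
  qed
  show ?thesis using part1 part2 by blast
qed

end
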